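(* Let $K$ be a field, let $I_1\subseteq S_1=K[x_1,\ldots,x_m]$ and $I_2\subseteq S_2=K[y_1,\ldots,y_n]$ be monomial ideals, let $S=S_1\otimes_K S_2=K[x_1,\ldots,x_m,y_1,\ldots,y_n]$, and let $I=(I_1,I_2)S$. Assume that $I_1$, $I_2$ and $I$ all satisfy the Ratliff condition. Regard $\mathrm{Soc}(I_1)$, $\mathrm{Soc}(I_2)$ and $\mathrm{Soc}(I)$ as ideals of $\mathrm{gr}_{I_1}(S_1)$, $\mathrm{gr}_{I_2}(S_2)$ and $\mathrm{gr}_I(S)$ respectively, and extend $\mathrm{Soc}(I_1)$, $\mathrm{Soc}(I_2)$ to ideals of $\mathrm{gr}_I(S)$ via the canonical injective maps $\mathrm{gr}_{I_i}(S_i)\to\mathrm{gr}_I(S)$. Then $\mathrm{Soc}(I)=\mathrm{Soc}(I_1)\,\mathrm{Soc}(I_2)$ (product of ideals in $\mathrm{gr}_I(S)$); equivalently, under the canonical isomorphism $\alpha:\mathrm{gr}_{I_1}(S_1)\otimes_K\mathrm{gr}_{I_2}(S_2)\to\mathrm{gr}_I(S)$, $f\otimes g\mapsto fg$, one has $\alpha(\mathrm{Soc}(I_1)\otimes_K\mathrm{Soc}(I_2))=\mathrm{Soc}(I)$.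
   Context: For an ideal $J$ in a ring $R$ (with maximal graded ideal $\mathfrak{n}$), $\mathrm{gr}_J(R)=\bigoplus_{k\ge0}J^k/J^{k+1}$ and $\mathrm{Soc}(J)=\bigoplus_{k\ge0}(J^k:\mathfrak{n})/J^k$. $J$ satisfies the Ratliff condition if $(J^{k+1}:J)=J^k$ for all $k\ge0$. Under this condition $(J^{k+1}:\mathfrak{n})\subseteq J^k$, so $(J^{k+1}:\mathfrak{n})/J^{k+1}\subseteq J^k/J^{k+1}$, and $\mathrm{Soc}(J)$ is identified with the ideal $(0:_{\mathrm{gr}_J(R)}\mathfrak{n})$ of $\mathrm{gr}_J(R)$, whose elements of degree $k$ are the classes $u+J^{k+1}\in J^k/J^{k+1}$ with $u\in (J^{k+1}:\mathfrak{n})$. Here $\mathfrak{n}$ is the maximal graded ideal of $S_1$, $S_2$ or $S$ respectively. The map $\alpha$ is an isomorphism. *)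

theory Defs
  imports "HOL-Library.Poly_Mapping" "HOL-Algebra.Ideal_Product" "HOL-Algebra.QuotRing"
begin

type_synonym 'k mpol = "(nat \<Rightarrow>\<^sub>0 nat) \<Rightarrow>\<^sub>0 'k"

definition polyring :: "nat set \<Rightarrow> 'k::field mpol set" where
  "polyring V = {p :: 'k mpol. \<forall>a \<in> Poly_Mapping.keys p. Poly_Mapping.keys a \<subseteq> V}"

definition Var :: "nat \<Rightarrow> 'k::field mpol" where
  "Var i = Poly_Mapping.single (Poly_Mapping.single i 1) 1"

definition is_monomial :: "'k::field mpol \<Rightarrow> bool" where
  "is_monomial p \<longleftrightarrow> (\<exists>a. p = Poly_Mapping.single a 1)"

definition ideal_in :: "'a::comm_ring_1 set \<Rightarrow> 'a set \<Rightarrow> 'a set" where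
  "ideal_in R X = {y. \<exists>F r. finite F \<and> F \<subseteq> X \<and> (\<forall>x\<in>F. r x \<in> R) \<and> y = (\<Sum>x\<in>F. r x * x)}"

definition monomial_ideal :: "nat set \<Rightarrow> 'k::field mpol set \<Rightarrow> bool" where
  "monomial_ideal V J \<longleftrightarrow>
     (\<exists>G. G \<subseteq> polyring V \<and> (\<forall>g\<in>G. is_monomial g) \<and> J = ideal_in (polyring V) G)"

primrec ipow :: "'a::comm_ring_1 set \<Rightarrow> 'a set \<Rightarrow> nat \<Rightarrow> 'a set" where
  "ipow R J 0 = R"
| "ipow R J (Suc k) = ideal_in R {a * b | a b. a \<in> ipow R J k \<and> b \<in> J}"

definition colon :: "'a::comm_ring_1 set \<Rightarrow> 'a set \<Rightarrow> 'a set \<Rightarrow> 'a set" where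
  "colon R J L = {u \<in> R. \<forall>v \<in> L. u * v \<in> J}"

definition max_graded :: "nat set \<Rightarrow> 'k::field mpol set" where
  "max_graded V = ideal_in (polyring V) (Var ` V)"

definition ratliff :: "'a::comm_ring_1 set \<Rightarrow> 'a set \<Rightarrow> bool" where
  "ratliff R J \<longleftrightarrow> (\<forall>k. colon R (ipow R J (Suc k)) J = ipow R J k)"

text \<open>The associated graded ring gr_J(R) = direct sum of the J^k/J^{k+1}, constructed as the
  quotient of the ring of finitely supported sequences f with f k \<in> J^k
  (with convolution product) by the ideal of those sequences with f k \<in> J^{k+1}.\<close>
definition seqring :: "'a::comm_ring_1 set \<Rightarrow> 'a set \<Rightarrow> (nat \<Rightarrow> 'a) ring" where
  "seqring R J = \<lparr> carrier = {f. (\<forall>k. f k \<in> ipow R J k) \<and> finite {k. f k \<noteq> 0}},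
                   monoid.mult = (\<lambda>f g k. \<Sum>i\<le>k. f i * g (k - i)),
                   one = (\<lambda>k. if k = 0 then 1 else 0),
                   zero = (\<lambda>k. 0),
                   add = (\<lambda>f g k. f k + g k) \<rparr>"

definition grN :: "'a::comm_ring_1 set \<Rightarrow> 'a set \<Rightarrow> (nat \<Rightarrow> 'a) set" where
  "grN R J = {f \<in> carrier (seqring R J). \<forall>k. f k \<in> ipow R J (Suc k)}"

definition gr :: "'a::comm_ring_1 set \<Rightarrow> 'a set \<Rightarrow> (nat \<Rightarrow> 'a) set ring" where
  "gr R J = seqring R J Quot grN R J"

text \<open>Soc(J) = direct sum of (J^{k+1}:n)/J^{k+1}, as a subset of gr_J(R): classes of sequences
  whose k-th component lies in (J^{k+1}:n) (and in J^k).\<close>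
definition Soc :: "'a::comm_ring_1 set \<Rightarrow> 'a set \<Rightarrow> 'a set \<Rightarrow> (nat \<Rightarrow> 'a) set set" where
  "Soc R n J = {grN R J +>\<^bsub>seqring R J\<^esub> f | f.
                  f \<in> carrier (seqring R J) \<and> (\<forall>k. f k \<in> colon R (ipow R J (Suc k)) n)}"

text \<open>Canonical map gr_{J'}(R') \<rightarrow> gr_J(R) induced by R' \<subseteq> R, J' \<subseteq> J:
  the class of f is sent to the class of f.\<close>
definition gr_map :: "'a::comm_ring_1 set \<Rightarrow> 'a set \<Rightarrow> (nat \<Rightarrow> 'a) set \<Rightarrow> (nat \<Rightarrow> 'a) set" where
  "gr_map R J C = (\<Union>f\<in>C. grN R J +>\<^bsub>seqring R J\<^esub> f)"

end

theory Submission
  imports Defs "HOL-Computational_Algebra.Formal_Power_Series"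
begin


definition subr :: "'a::comm_ring_1 set \<Rightarrow> bool" where
 "subr R \<longleftrightarrow> 0 \<in> R \<and> 1 \<in> R \<and> (\<forall>x\<in>R. \<forall>y\<in>R. x+y \<in> R \<and> x*y \<in> R) \<and> (\<forall>x\<in>R. -x \<in> R)"

definition isid :: "'a::comm_ring_1 set \<Rightarrow> 'a set \<Rightarrow> bool" where
 "isid R J \<longleftrightarrow> J \<subseteq> R \<and> 0 \<in> J \<and> (\<forall>x\<in>J. \<forall>y\<in>J. x+y \<in> J) \<and> (\<forall>r\<in>R. \<forall>x\<in>J. r*x \<in> J)"

lemma addclosed_sum:
  assumes "0 \<in> J" "\<And>x y. x \<in> J \<Longrightarrow> y \<in> J \<Longrightarrow> x + y \<in> J" "\<And>x. x \<in> F \<Longrightarrow> g x \<in> J"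
  shows "sum g F \<in> J"
proof (cases "finite F")
  case True
  then show ?thesis using assms(3)
    by (induction F rule: finite_induct) (auto simp: assms(1,2))
next
  case False
  then show ?thesis using assms(1) by simp
qed

lemma isid_sum: "isid R J \<Longrightarrow> (\<And>x. x \<in> F \<Longrightarrow> g x \<in> J) \<Longrightarrow> sum g F \<in> J"
  unfolding isid_def by (intro addclosed_sum) auto

lemma ideal_in_min:
  assumes "isid R J" "X \<subseteq> J" shows "ideal_in R X \<subseteq> J"
proof
  fix y assume "y \<in> ideal_in R X"
  then obtain F r where F: "finite F" "F \<subseteq> X" "\<forall>x\<in>F. r x \<in> R" "y = (\<Sum>x\<in>F. r x * x)"
    unfolding ideal_in_def by blast
  show "y \<in> J" unfolding F(4)
    apply (rule isid_sum[OF assms(1)])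
    using F assms unfolding isid_def by blast
qed

lemma ideal_in_gen:
  assumes "x \<in> X" "r \<in> R" shows "r * x \<in> ideal_in R X"
  unfolding ideal_in_def
  apply (rule CollectI, rule exI[of _ "{x}"], rule exI[of _ "\<lambda>_. r"])
  using assms by auto

lemma ideal_in_gen1:
  assumes "subr R" "x \<in> X" shows "x \<in> ideal_in R X"
  using ideal_in_gen[OF assms(2), of 1 R] assms(1) unfolding subr_def by simp

lemma ideal_inI: "finite F \<Longrightarrow> F \<subseteq> X \<Longrightarrow> (\<And>x. x\<in>F \<Longrightarrow> r x \<in> R) \<Longrightarrow> y = (\<Sum>x\<in>F. r x * x) \<Longrightarrow> y \<in> ideal_in R X"
  unfolding ideal_in_def by blast

lemma ideal_in_isid:
  assumes R: "subr R" and X: "X \<subseteq> R" shows "isid R (ideal_in R X)"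
  unfolding isid_def
proof (intro conjI ballI subsetI)
  fix y assume "y \<in> ideal_in R X"
  then obtain F r where F: "finite F" "F \<subseteq> X" "\<forall>x\<in>F. r x \<in> R" "y = (\<Sum>x\<in>F. r x * x)"
    unfolding ideal_in_def by blast
  show "y \<in> R" unfolding F(4)
    apply (rule addclosed_sum) using R F X unfolding subr_def by blast+
next
  show "0 \<in> ideal_in R X"
    by (rule ideal_inI[of "{}"]) auto
next
  fix y z assume "y \<in> ideal_in R X" "z \<in> ideal_in R X"
  then obtain F1 r1 F2 r2 where F1: "finite F1" "F1 \<subseteq> X" "\<forall>x\<in>F1. r1 x \<in> R" "y = (\<Sum>x\<in>F1. r1 x * x)"
     and F2: "finite F2" "F2 \<subseteq> X" "\<forall>x\<in>F2. r2 x \<in> R" "z = (\<Sum>x\<in>F2. r2 x * x)"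
    unfolding ideal_in_def by blast
  define r where "r x = (if x \<in> F1 then r1 x else 0) + (if x \<in> F2 then r2 x else 0)" for x
  have "(\<Sum>x\<in>F1 \<union> F2. r x * x) = (\<Sum>x\<in>F1 \<union> F2. (if x \<in> F1 then r1 x * x else 0))
          + (\<Sum>x\<in>F1 \<union> F2. (if x \<in> F2 then r2 x * x else 0))"
    unfolding sum.distrib[symmetric] by (rule sum.cong) (auto simp: r_def distrib_right)
  also have "(\<Sum>x\<in>F1 \<union> F2. (if x \<in> F1 then r1 x * x else 0)) = y"
    unfolding F1(4) using F1(1) F2(1) by (intro sum.mono_neutral_cong_right) auto
  also have "(\<Sum>x\<in>F1 \<union> F2. (if x \<in> F2 then r2 x * x else 0)) = z"
    unfolding F2(4) using F1(1) F2(1) by (intro sum.mono_neutral_cong_right) auto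
  finally have eq: "y + z = (\<Sum>x\<in>F1 \<union> F2. r x * x)" by simp
  have rR: "r x \<in> R" if "x \<in> F1 \<union> F2" for x
  proof -
    have "(if x \<in> F1 then r1 x else 0) \<in> R" using F1(3) R unfolding subr_def by simp
    moreover have "(if x \<in> F2 then r2 x else 0) \<in> R" using F2(3) R unfolding subr_def by simp
    ultimately show ?thesis unfolding r_def using R unfolding subr_def by blast
  qed
  show "y + z \<in> ideal_in R X"
    by (rule ideal_inI[OF _ _ rR eq]) (use F1 F2 in auto)
next
  fix s y assume s: "s \<in> R" and "y \<in> ideal_in R X"
  then obtain F r where F: "finite F" "F \<subseteq> X" "\<forall>x\<in>F. r x \<in> R" "y = (\<Sum>x\<in>F. r x * x)"
    unfolding ideal_in_def by blast
  have eq: "s * y = (\<Sum>x\<in>F. (s * r x) * x)" unfolding F(4) by (simp add: sum_distrib_left mult.assoc)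
  have "s * r x \<in> R" if "x \<in> F" for x using R F s that unfolding subr_def by blast
  then show "s * y \<in> ideal_in R X" by (rule ideal_inI[OF F(1) F(2) _ eq])
qed

section \<open>Polynomial rings\<close>

lemma polyring_add: "x \<in> polyring V \<Longrightarrow> y \<in> polyring V \<Longrightarrow> x + y \<in> polyring V"
  unfolding polyring_def using keys_add[of x y] by auto

lemma polyring_mult: "x \<in> polyring V \<Longrightarrow> y \<in> polyring V \<Longrightarrow> x * y \<in> polyring V"
  unfolding polyring_def
proof (intro CollectI ballI)
  fix a assume x: "x \<in> {p. \<forall>a\<in>Poly_Mapping.keys p. Poly_Mapping.keys a \<subseteq> V}"
    and y: "y \<in> {p. \<forall>a\<in>Poly_Mapping.keys p. Poly_Mapping.keys a \<subseteq> V}"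
    and a: "a \<in> Poly_Mapping.keys (x * y)"
  then obtain b c where "a = b + c" "b \<in> Poly_Mapping.keys x" "c \<in> Poly_Mapping.keys y" using keys_mult[of x y] by blast
  then show "Poly_Mapping.keys a \<subseteq> V" using keys_add[of b c] x y by blast
qed

lemma subr_polyring: "subr (polyring V)"
proof -
  have "(0::'a mpol) \<in> polyring V" "(1::'a mpol) \<in> polyring V" unfolding polyring_def by simp_all
  moreover have "x \<in> polyring V \<Longrightarrow> - x \<in> polyring V" for x :: "'a mpol" unfolding polyring_def by simp
  ultimately show ?thesis unfolding subr_def using polyring_add polyring_mult by blast
qed

lemma single_in_polyring: "Poly_Mapping.keys a \<subseteq> V \<Longrightarrow> Poly_Mapping.single a c \<in> polyring V"
  unfolding polyring_def by auto

lemma Var_in_polyring: "i \<in> V \<Longrightarrow> Var i \<in> polyring V"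
  unfolding Var_def by (rule single_in_polyring) simp

lemma polyring_mono: "V \<subseteq> W \<Longrightarrow> polyring V \<subseteq> polyring W"
  unfolding polyring_def by auto

definition lem :: "(nat \<Rightarrow>\<^sub>0 nat) \<Rightarrow> (nat \<Rightarrow>\<^sub>0 nat) \<Rightarrow> bool" where
  "lem e a \<longleftrightarrow> (\<forall>i. Poly_Mapping.lookup e i \<le> Poly_Mapping.lookup a i)"

definition ME :: "nat set \<Rightarrow> (nat \<Rightarrow>\<^sub>0 nat) set \<Rightarrow> 'k::field mpol set" where
  "ME V E = {p \<in> polyring V. \<forall>a\<in>Poly_Mapping.keys p. \<exists>e\<in>E. lem e a}"

lemma lem_keys: "lem e a \<Longrightarrow> Poly_Mapping.keys e \<subseteq> Poly_Mapping.keys a"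
proof
  fix i assume l: "lem e a" and "i \<in> Poly_Mapping.keys e"
  then have "Poly_Mapping.lookup e i \<noteq> 0" by (simp add: in_keys_iff)
  moreover have "Poly_Mapping.lookup e i \<le> Poly_Mapping.lookup a i" using l unfolding lem_def by blast
  ultimately show "i \<in> Poly_Mapping.keys a" by (simp add: in_keys_iff)
qed

lemma lem_refl: "lem a a" unfolding lem_def by simp
lemma lem_trans: "lem a b \<Longrightarrow> lem b c \<Longrightarrow> lem a c" unfolding lem_def using le_trans by blast
lemma lem_add: "lem a b \<Longrightarrow> lem c d \<Longrightarrow> lem (a + c) (b + d)"
  unfolding lem_def by (simp add: lookup_add add_mono)
lemma lem_add_right: "lem a (a + b)" unfolding lem_def by (simp add: lookup_add)
lemma lem_zero: "lem 0 a" unfolding lem_def by simp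

lemma minus_add_lem: "lem e a \<Longrightarrow> (a - e) + e = a"
  unfolding lem_def by (intro poly_mapping_eqI) (simp add: lookup_add lookup_minus)

lemma keys_minus_sub: "Poly_Mapping.keys (a - e) \<subseteq> Poly_Mapping.keys (a::nat \<Rightarrow>\<^sub>0 nat)"
  by (auto simp: in_keys_iff lookup_minus)

lemma isid_ME: "isid (polyring V) (ME V E :: 'k::field mpol set)"
  unfolding isid_def
proof (intro conjI ballI subsetI)
  show "x \<in> ME V E \<Longrightarrow> x \<in> polyring V" for x unfolding ME_def by simp
  show "0 \<in> ME V E" unfolding ME_def polyring_def by simp
  fix x y :: "'k mpol" assume x: "x \<in> ME V E" and y: "y \<in> ME V E"
  show "x + y \<in> ME V E" unfolding ME_def
  proof (intro CollectI conjI ballI)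
    show "x + y \<in> polyring V" using x y polyring_add unfolding ME_def by blast
    fix a assume "a \<in> Poly_Mapping.keys (x + y)"
    then have "a \<in> Poly_Mapping.keys x \<or> a \<in> Poly_Mapping.keys y" using keys_add[of x y] by blast
    then show "\<exists>e\<in>E. lem e a" using x y unfolding ME_def by blast
  qed
next
  fix r x :: "'k mpol" assume r: "r \<in> polyring V" and x: "x \<in> ME V E"
  show "r * x \<in> ME V E" unfolding ME_def
  proof (intro CollectI conjI ballI)
    show "r * x \<in> polyring V" using x r polyring_mult unfolding ME_def by blast
    fix a assume "a \<in> Poly_Mapping.keys (r * x)"
    then obtain b c where abc: "a = b + c" "b \<in> Poly_Mapping.keys r" "c \<in> Poly_Mapping.keys x" using keys_mult[of r x] by blast
    then obtain e where e: "e \<in> E" "lem e c" using x unfolding ME_def by blast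
    have "lem c a" unfolding abc(1) using lem_add_right[of c b] by (simp add: add.commute)
    then show "\<exists>e\<in>E. lem e a" using e lem_trans by blast
  qed
qed

lemma poly_decomp: "p = (\<Sum>a\<in>Poly_Mapping.keys p. Poly_Mapping.single a (Poly_Mapping.lookup p a))"
  by (intro poly_mapping_eqI) (simp add: lookup_sum lookup_single when_def in_keys_iff)

lemma single_decomp: "lem e a \<Longrightarrow> Poly_Mapping.single a c = Poly_Mapping.single (a - e) c * Poly_Mapping.single e (1::'a::comm_ring_1)"
  by (simp add: mult_single minus_add_lem)

lemma ME_sub:
  assumes T: "isid (polyring V) T" and E: "\<And>e. e \<in> E \<Longrightarrow> Poly_Mapping.keys e \<subseteq> V \<Longrightarrow> Poly_Mapping.single e 1 \<in> T"
  shows "ME V E \<subseteq> (T :: 'k::field mpol set)"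
proof
  fix p :: "'k mpol" assume p: "p \<in> ME V E"
  have "(\<Sum>a\<in>Poly_Mapping.keys p. Poly_Mapping.single a (Poly_Mapping.lookup p a)) \<in> T"
  proof (rule isid_sum[OF T])
    fix a assume a: "a \<in> Poly_Mapping.keys p"
    then obtain e where e: "e \<in> E" "lem e a" using p unfolding ME_def by blast
    have kV: "Poly_Mapping.keys a \<subseteq> V" using a p unfolding ME_def polyring_def by blast
    have "Poly_Mapping.single (a - e) (Poly_Mapping.lookup p a) \<in> polyring V"
      using kV keys_minus_sub[of a e] by (intro single_in_polyring) blast
    moreover have "Poly_Mapping.single e 1 \<in> T" using E e kV lem_keys by blast
    ultimately have "Poly_Mapping.single (a - e) (Poly_Mapping.lookup p a) * Poly_Mapping.single e 1 \<in> T"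
      using T unfolding isid_def by blast
    then show "Poly_Mapping.single a (Poly_Mapping.lookup p a) \<in> T"
      using single_decomp[OF e(2)] by metis
  qed
  then show "p \<in> T" using poly_decomp[of p] by simp
qed



primrec pw :: "(nat \<Rightarrow>\<^sub>0 nat) set \<Rightarrow> nat \<Rightarrow> (nat \<Rightarrow>\<^sub>0 nat) set" where
  "pw E 0 = {0}"
| "pw E (Suc k) = {e + f | e f. e \<in> pw E k \<and> f \<in> E}"

lemma ME_mult:
  assumes p: "p \<in> ME V A" and q: "q \<in> ME V B"
  shows "p * q \<in> ME V {a + b | a b. a \<in> A \<and> b \<in> B}"
  unfolding ME_def
proof (intro CollectI conjI ballI)
  show "p * q \<in> polyring V" using p q polyring_mult unfolding ME_def by blast
  fix x assume "x \<in> Poly_Mapping.keys (p * q)"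
  then obtain b c where bc: "x = b + c" "b \<in> Poly_Mapping.keys p" "c \<in> Poly_Mapping.keys q" using keys_mult[of p q] by blast
  obtain e1 where e1: "e1 \<in> A" "lem e1 b" using p bc unfolding ME_def by blast
  obtain e2 where e2: "e2 \<in> B" "lem e2 c" using q bc unfolding ME_def by blast
  have "lem (e1 + e2) x" unfolding bc(1) using e1 e2 lem_add by blast
  then show "\<exists>e\<in>{a + b |a b. a \<in> A \<and> b \<in> B}. lem e x" using e1 e2 by blast
qed

lemma single_in_ME:
  assumes "c \<noteq> 0" shows "Poly_Mapping.single a c \<in> ME V E \<longleftrightarrow> Poly_Mapping.keys a \<subseteq> V \<and> (\<exists>e\<in>E. lem e a)"
  using assms unfolding ME_def polyring_def by simp

lemma single1_in_ME: "Poly_Mapping.keys a \<subseteq> V \<Longrightarrow> e \<in> E \<Longrightarrow> lem e a \<Longrightarrow> Poly_Mapping.single a 1 \<in> ME V E"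
  by (subst single_in_ME) auto

lemma ME_mono: "V \<subseteq> W \<Longrightarrow> (\<And>e. e\<in>A \<Longrightarrow> \<exists>e'\<in>B. lem e' e) \<Longrightarrow> ME V A \<subseteq> ME W B"
proof
  fix x assume V: "V \<subseteq> W" and AB: "\<And>e. e\<in>A \<Longrightarrow> \<exists>e'\<in>B. lem e' e" and x: "x \<in> ME V A"
  show "x \<in> ME W B" unfolding ME_def
  proof (intro CollectI conjI ballI)
    show "x \<in> polyring W" using x polyring_mono[OF V] unfolding ME_def by blast
    fix a assume "a \<in> Poly_Mapping.keys x"
    then obtain e where "e \<in> A" "lem e a" using x unfolding ME_def by blast
    then obtain e' where "e' \<in> B" "lem e' e" using AB by blast
    then show "\<exists>e\<in>B. lem e a" using \<open>lem e a\<close> lem_trans by blast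
  qed
qed

lemma ipow_ME: "ipow (polyring V) (ME V E) k = (ME V (pw E k) :: 'k::field mpol set)"
proof (induction k)
  case 0
  show ?case unfolding ME_def using lem_zero by auto
next
  case (Suc k)
  define Gen where "Gen = {a * b |a b. a \<in> ipow (polyring V) (ME V E) k \<and> (b :: 'k mpol) \<in> ME V E}"
  have eq: "ipow (polyring V) (ME V E) (Suc k) = ideal_in (polyring V) Gen" unfolding Gen_def by simp
  have GenR: "Gen \<subseteq> polyring V" unfolding Gen_def Suc using polyring_mult unfolding ME_def by blast
  show ?case unfolding eq
  proof
    show "ideal_in (polyring V) Gen \<subseteq> ME V (pw E (Suc k))"
    proof (rule ideal_in_min[OF isid_ME])
      show "Gen \<subseteq> ME V (pw E (Suc k))"
      proof
        fix x assume "x \<in> Gen"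
        then obtain a b where ab: "x = a * b" "a \<in> ME V (pw E k)" "b \<in> ME V E" unfolding Gen_def Suc by blast
        show "x \<in> ME V (pw E (Suc k))" unfolding ab(1) pw.simps using ME_mult[OF ab(2,3)] by simp
      qed
    qed
  next
    show "ME V (pw E (Suc k)) \<subseteq> ideal_in (polyring V) Gen"
    proof (rule ME_sub[OF ideal_in_isid[OF subr_polyring GenR]])
      fix e assume e: "e \<in> pw E (Suc k)" and eV: "Poly_Mapping.keys e \<subseteq> V"
      then obtain e1 f where ef: "e = e1 + f" "e1 \<in> pw E k" "f \<in> E" by auto
      have k1: "Poly_Mapping.keys e1 \<subseteq> V" using lem_keys[OF lem_add_right[of e1 f]] eV ef(1) by blast
      have k2: "Poly_Mapping.keys f \<subseteq> V" using lem_keys[OF lem_add_right[of f e1]] eV ef(1) by (simp add: add.commute)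
      have "Poly_Mapping.single e1 1 \<in> ME V (pw E k)" by (rule single1_in_ME[OF k1 ef(2) lem_refl])
      moreover have "Poly_Mapping.single f 1 \<in> ME V E" by (rule single1_in_ME[OF k2 ef(3) lem_refl])
      ultimately have "Poly_Mapping.single e1 1 * Poly_Mapping.single f 1 \<in> Gen" unfolding Gen_def Suc by blast
      moreover have "Poly_Mapping.single e1 1 * Poly_Mapping.single f 1 = (Poly_Mapping.single e 1 :: 'k mpol)"
        unfolding ef(1) by (simp add: mult_single)
      ultimately show "Poly_Mapping.single e 1 \<in> ideal_in (polyring V) Gen"
        using ideal_in_gen1[OF subr_polyring] by metis
    qed
  qed
qed

lemma pw_add: "e1 \<in> pw E i \<Longrightarrow> e2 \<in> pw E j \<Longrightarrow> e1 + e2 \<in> pw E (i + j)"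
proof (induction j arbitrary: e2)
  case 0 then show ?case by simp
next
  case (Suc j)
  then obtain e f where "e2 = e + f" "e \<in> pw E j" "f \<in> E" by auto
  then have "e1 + e \<in> pw E (i + j)" using Suc by blast
  then have "(e1 + e) + f \<in> pw E (Suc (i + j))" using \<open>f \<in> E\<close> by auto
  then show ?case using \<open>e2 = e + f\<close> by (simp add: add.assoc)
qed

lemma pw_mono: "A \<subseteq> B \<Longrightarrow> pw A k \<subseteq> pw B k"
  by (induction k) auto

lemma pw_union:
  "e \<in> pw (A \<union> B) j \<longleftrightarrow> (\<exists>c d e1 e2. c + d = j \<and> e1 \<in> pw A c \<and> e2 \<in> pw B d \<and> e = e1 + e2)"
proof
  assume "e \<in> pw (A \<union> B) j"
  then show "\<exists>c d e1 e2. c + d = j \<and> e1 \<in> pw A c \<and> e2 \<in> pw B d \<and> e = e1 + e2"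
  proof (induction j arbitrary: e)
    case 0 then show ?case by auto
  next
    case (Suc j)
    then obtain e' f where ef: "e = e' + f" "e' \<in> pw (A \<union> B) j" "f \<in> A \<union> B" by auto
    then obtain c d e1 e2 where cd: "c + d = j" "e1 \<in> pw A c" "e2 \<in> pw B d" "e' = e1 + e2" using Suc.IH by blast
    show ?case
    proof (cases "f \<in> A")
      case True
      have "e1 + f \<in> pw A (Suc c)" using cd True by auto
      moreover have "e = (e1 + f) + e2" using ef cd by (simp add: ac_simps)
      ultimately show ?thesis using cd by (intro exI[of _ "Suc c"] exI[of _ d]) auto
    next
      case False
      then have "f \<in> B" using ef by blast
      have "e2 + f \<in> pw B (Suc d)" using cd \<open>f \<in> B\<close> by auto
      moreover have "e = e1 + (e2 + f)" using ef cd by (simp add: ac_simps)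
      ultimately show ?thesis using cd by (intro exI[of _ c] exI[of _ "Suc d"]) auto
    qed
  qed
next
  assume "\<exists>c d e1 e2. c + d = j \<and> e1 \<in> pw A c \<and> e2 \<in> pw B d \<and> e = e1 + e2"
  then obtain c d e1 e2 where "c + d = j" "e1 \<in> pw A c" "e2 \<in> pw B d" "e = e1 + e2" by blast
  moreover have "e1 \<in> pw (A \<union> B) c" using pw_mono[of A "A \<union> B" c] \<open>e1 \<in> pw A c\<close> by blast
  moreover have "e2 \<in> pw (A \<union> B) d" using pw_mono[of B "A \<union> B" d] \<open>e2 \<in> pw B d\<close> by blast
  ultimately show "e \<in> pw (A \<union> B) j" using pw_add by blast
qed

lemma pw_keys: "(\<And>e. e\<in>E \<Longrightarrow> Poly_Mapping.keys e \<subseteq> V) \<Longrightarrow> e \<in> pw E k \<Longrightarrow> Poly_Mapping.keys e \<subseteq> V"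
proof (induction k arbitrary: e)
  case 0 then show ?case by simp
next
  case (Suc k)
  then obtain e' f where "e = e' + f" "e' \<in> pw E k" "f \<in> E" by auto
  then show ?case using Suc keys_add[of e' f] by blast
qed

lemma pw_down: "e \<in> pw E d \<Longrightarrow> j \<le> d \<Longrightarrow> \<exists>e'\<in>pw E j. lem e' e"
proof (induction d arbitrary: e)
  case 0 then show ?case using lem_refl by auto
next
  case (Suc d)
  show ?case
  proof (cases "j = Suc d")
    case True then show ?thesis using Suc.prems lem_refl by blast
  next
    case False
    then have "j \<le> d" using Suc.prems by simp
    obtain e0 f where ef: "e = e0 + f" "e0 \<in> pw E d" "f \<in> E" using Suc.prems by auto
    then obtain e' where "e' \<in> pw E j" "lem e' e0" using Suc.IH \<open>j \<le> d\<close> by blast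
    then show ?thesis using ef lem_add_right[of e0 f] lem_trans by blast
  qed
qed

lemma monomial_ideal_ME:
  assumes "monomial_ideal V (J :: 'k::field mpol set)"
  obtains E where "\<And>e. e \<in> E \<Longrightarrow> Poly_Mapping.keys e \<subseteq> V" "J = ME V E"
proof -
  obtain G where G: "G \<subseteq> polyring V" "\<forall>g\<in>G. is_monomial g" "J = ideal_in (polyring V) G"
    using assms unfolding monomial_ideal_def by blast
  define E where "E = {a. Poly_Mapping.single a (1::'k) \<in> G}"
  have EV: "Poly_Mapping.keys e \<subseteq> V" if "e \<in> E" for e
  proof -
    have "Poly_Mapping.single e (1::'k) \<in> polyring V" using that G(1) unfolding E_def by blast
    then show ?thesis unfolding polyring_def by simp
  qed
  have "ideal_in (polyring V) G = ME V E"
  proof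
    show "ideal_in (polyring V) G \<subseteq> ME V E"
    proof (rule ideal_in_min[OF isid_ME], rule subsetI)
      fix g assume g: "g \<in> G"
      then obtain a where a: "g = Poly_Mapping.single a 1" using G(2) unfolding is_monomial_def by blast
      then have "a \<in> E" using g unfolding E_def by simp
      then show "g \<in> ME V E" unfolding a using single1_in_ME[OF EV[OF \<open>a \<in> E\<close>] \<open>a \<in> E\<close> lem_refl] by blast
    qed
  next
    show "ME V E \<subseteq> ideal_in (polyring V) G"
    proof (rule ME_sub[OF ideal_in_isid[OF subr_polyring G(1)]])
      fix e assume "e \<in> E" then show "Poly_Mapping.single e 1 \<in> ideal_in (polyring V) G"
        using ideal_in_gen1[OF subr_polyring] unfolding E_def by blast
    qed
  qed
  then show ?thesis using that EV G(3) by blast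
qed

lemma ideal_sum_ME:
  assumes E1: "\<And>e. e \<in> E1 \<Longrightarrow> Poly_Mapping.keys e \<subseteq> X" and E2: "\<And>e. e \<in> E2 \<Longrightarrow> Poly_Mapping.keys e \<subseteq> Y"
  shows "ideal_in (polyring (X \<union> Y)) (ME X E1 \<union> ME Y E2) = (ME (X \<union> Y) (E1 \<union> E2) :: 'k::field mpol set)"
proof
  have s1: "ME X E1 \<subseteq> (ME (X \<union> Y) (E1 \<union> E2) :: 'k mpol set)"
  proof (rule ME_mono)
    fix e assume "e \<in> E1" then show "\<exists>e'\<in>E1 \<union> E2. lem e' e" using lem_refl by blast
  qed simp
  have s2: "ME Y E2 \<subseteq> (ME (X \<union> Y) (E1 \<union> E2) :: 'k mpol set)"
  proof (rule ME_mono)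
    fix e assume "e \<in> E2" then show "\<exists>e'\<in>E1 \<union> E2. lem e' e" using lem_refl by blast
  qed simp
  have s12: "ME X E1 \<union> ME Y E2 \<subseteq> (ME (X \<union> Y) (E1 \<union> E2) :: 'k mpol set)"
    using s1 s2 by (rule Un_least)
  show "ideal_in (polyring (X \<union> Y)) (ME X E1 \<union> ME Y E2) \<subseteq> (ME (X \<union> Y) (E1 \<union> E2) :: 'k mpol set)"
    by (rule ideal_in_min[OF isid_ME s12])
  have "(ME (X \<union> Y) (E1 \<union> E2) :: 'k mpol set) \<subseteq> polyring (X \<union> Y)" unfolding ME_def by (rule subsetI) simp
  then have GR: "(ME X E1 \<union> ME Y E2) \<subseteq> (polyring (X \<union> Y) :: 'k mpol set)"
    using s12 by (rule subset_trans[rotated])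
  show "(ME (X \<union> Y) (E1 \<union> E2) :: 'k mpol set) \<subseteq> ideal_in (polyring (X \<union> Y)) (ME X E1 \<union> ME Y E2)"
  proof (rule ME_sub[OF ideal_in_isid[OF subr_polyring GR]])
    fix e assume "e \<in> E1 \<union> E2"
    then have "Poly_Mapping.single e (1::'k) \<in> ME X E1 \<union> ME Y E2"
    proof
      assume "e \<in> E1" show ?thesis by (rule UnI1[OF single1_in_ME[OF E1[OF \<open>e \<in> E1\<close>] \<open>e \<in> E1\<close> lem_refl]])
    next
      assume "e \<in> E2" show ?thesis by (rule UnI2[OF single1_in_ME[OF E2[OF \<open>e \<in> E2\<close>] \<open>e \<in> E2\<close> lem_refl]])
    qed
    then show "Poly_Mapping.single e (1::'k) \<in> ideal_in (polyring (X \<union> Y)) (ME X E1 \<union> ME Y E2)"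
      by (rule ideal_in_gen1[OF subr_polyring])
  qed
qed



definition fil :: "'a::comm_ring_1 set \<Rightarrow> 'a set \<Rightarrow> bool" where
 "fil R J \<longleftrightarrow> (\<forall>k. 0 \<in> ipow R J k \<and> (\<forall>x\<in>ipow R J k. \<forall>y\<in>ipow R J k. x+y \<in> ipow R J k) \<and> (\<forall>x\<in>ipow R J k. -x \<in> ipow R J k))
     \<and> (\<forall>k. ipow R J (Suc k) \<subseteq> ipow R J k) \<and> 1 \<in> ipow R J 0 \<and> (\<forall>i j. \<forall>x\<in>ipow R J i. \<forall>y\<in>ipow R J j. x*y \<in> ipow R J (i+j))"

lemma seq_carrier: "carrier (seqring R J) = {f. (\<forall>k. f k \<in> ipow R J k) \<and> finite {k. f k \<noteq> 0}}"
  unfolding seqring_def by simp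
lemma seq_mult: "f \<otimes>\<^bsub>seqring R J\<^esub> g = (\<lambda>k. \<Sum>i\<le>k. f i * g (k - i))"
  unfolding seqring_def by simp
lemma seq_add: "f \<oplus>\<^bsub>seqring R J\<^esub> g = (\<lambda>k. f k + g k)"
  unfolding seqring_def by simp
lemma seq_zero: "\<zero>\<^bsub>seqring R J\<^esub> = (\<lambda>k. 0)"
  unfolding seqring_def by simp
lemma seq_one: "\<one>\<^bsub>seqring R J\<^esub> = (\<lambda>k. if k = 0 then 1 else 0)"
  unfolding seqring_def by simp

lemma conv_fps: "(\<lambda>k. \<Sum>i\<le>k. f i * g (k - i)) = fps_nth (Abs_fps f * Abs_fps g)"
  by (rule ext) (simp add: fps_mult_nth atLeast0AtMost)

lemma finite_bound: "finite {k::nat. f k \<noteq> 0} \<Longrightarrow> \<exists>N. \<forall>k\<ge>N. f k = 0"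
proof -
  assume "finite {k::nat. f k \<noteq> 0}"
  then obtain N where "\<forall>n\<in>{k. f k \<noteq> 0}. n < N" using finite_nat_set_iff_bounded by blast
  show ?thesis
  proof (intro exI allI impI)
    fix k assume "N \<le> k"
    show "f k = 0"
    proof (rule ccontr)
      assume "f k \<noteq> 0" then have "k < N" using \<open>\<forall>n\<in>{k. f k \<noteq> 0}. n < N\<close> by blast
      then show False using \<open>N \<le> k\<close> by simp
    qed
  qed
qed

lemma conv_finite:
  assumes "finite {k::nat. f k \<noteq> 0}" "finite {k. g k \<noteq> (0::'a::comm_ring_1)}"
  shows "finite {k. (\<Sum>i\<le>k. f i * g (k - i)) \<noteq> 0}"
proof -
  obtain N1 where N1: "\<forall>k\<ge>N1. f k = 0" using finite_bound[OF assms(1)] by blast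
  obtain N2 where N2: "\<forall>k\<ge>N2. g k = 0" using finite_bound[OF assms(2)] by blast
  have "{k. (\<Sum>i\<le>k. f i * g (k - i)) \<noteq> 0} \<subseteq> {..<N1+N2}"
  proof
    fix k assume k: "k \<in> {k. (\<Sum>i\<le>k. f i * g (k - i)) \<noteq> 0}"
    show "k \<in> {..<N1+N2}"
    proof (rule ccontr)
      assume "k \<notin> {..<N1+N2}"
      then have kN: "N1 + N2 \<le> k" by simp
      have "f i * g (k - i) = 0" if "i \<le> k" for i
      proof (cases "i < N1")
        case True
        then have "N2 \<le> k - i" using kN by simp
        then show ?thesis using N1 N2 by simp
      next
        case False
        then show ?thesis using N1 by simp
      qed
      then have "\<forall>i\<le>k. f i * g (k - i) = 0" by blast
      then show False using k by simp
    qed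
  qed
  then show ?thesis using finite_subset by blast
qed

lemma fil_sum: "fil R J \<Longrightarrow> (\<And>i. i \<in> F \<Longrightarrow> g i \<in> ipow R J k) \<Longrightarrow> sum g F \<in> ipow R J k"
  unfolding fil_def by (intro addclosed_sum) auto

lemma seq_mult_closed:
  assumes fil: "fil R J" and f: "f \<in> carrier (seqring R J)" and g: "g \<in> carrier (seqring R J)"
  shows "f \<otimes>\<^bsub>seqring R J\<^esub> g \<in> carrier (seqring R J)"
proof -
  have "(\<Sum>i\<le>k. f i * g (k - i)) \<in> ipow R J k" for k
  proof (rule fil_sum[OF fil])
    fix i assume "i \<in> {..k}"
    then have "i + (k - i) = k" by simp
    moreover have "f i * g (k - i) \<in> ipow R J (i + (k - i))"
      using fil f g unfolding fil_def seq_carrier by blast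
    ultimately show "f i * g (k - i) \<in> ipow R J k" by simp
  qed
  moreover have "finite {k. (\<Sum>i\<le>k. f i * g (k - i)) \<noteq> 0}"
    using f g conv_finite unfolding seq_carrier by blast
  ultimately show ?thesis unfolding seq_carrier seq_mult by simp
qed

lemma seq_add_closed:
  assumes fil: "fil R J" and f: "f \<in> carrier (seqring R J)" and g: "g \<in> carrier (seqring R J)"
  shows "f \<oplus>\<^bsub>seqring R J\<^esub> g \<in> carrier (seqring R J)"
proof -
  have "{k. f k + g k \<noteq> 0} \<subseteq> {k. f k \<noteq> 0} \<union> {k. g k \<noteq> 0}" by auto
  moreover have "finite ({k. f k \<noteq> 0} \<union> {k. g k \<noteq> 0})" using f g unfolding seq_carrier by simp
  ultimately have "finite {k. f k + g k \<noteq> 0}" by (rule finite_subset)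
  moreover have "\<forall>k. f k + g k \<in> ipow R J k" using fil f g unfolding fil_def seq_carrier by blast
  ultimately show ?thesis unfolding seq_carrier seq_add by simp
qed

lemma seq_neg_closed:
  assumes fil: "fil R J" and f: "f \<in> carrier (seqring R J)"
  shows "(\<lambda>k. - f k) \<in> carrier (seqring R J)"
  using assms unfolding fil_def seq_carrier by simp

lemma seq_zero_closed: "fil R J \<Longrightarrow> (\<lambda>k. 0) \<in> carrier (seqring R J)"
  unfolding fil_def seq_carrier by simp

lemma seq_one_closed: "fil R J \<Longrightarrow> (\<lambda>k. if k = 0 then 1 else 0) \<in> carrier (seqring R J)"
proof -
  assume fil: "fil R J"
  have "{k. (if k = 0 then 1 else 0) \<noteq> (0::'a)} \<subseteq> {0}" by auto
  then have "finite {k. (if k = 0 then 1 else 0) \<noteq> (0::'a)}" using finite_subset by blast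
  moreover have "(if k = 0 then 1 else 0) \<in> ipow R J k" for k using fil unfolding fil_def by auto
  ultimately show ?thesis unfolding seq_carrier by simp
qed

lemma seq_cring: assumes fil: "fil R J" shows "cring (seqring R J)"
proof (rule cringI)
  show "abelian_group (seqring R J)"
  proof (rule abelian_groupI)
    fix x assume x: "x \<in> carrier (seqring R J)"
    show "\<exists>y\<in>carrier (seqring R J). y \<oplus>\<^bsub>seqring R J\<^esub> x = \<zero>\<^bsub>seqring R J\<^esub>"
      using seq_neg_closed[OF fil x] unfolding seq_add seq_zero by force
  qed (auto simp: seq_add_closed[OF fil, unfolded seq_add] seq_zero_closed[OF fil] seq_add seq_zero ac_simps)
next
  show "comm_monoid (seqring R J)"
  proof (rule comm_monoidI)
    fix x y z assume "x \<in> carrier (seqring R J)" "y \<in> carrier (seqring R J)" "z \<in> carrier (seqring R J)"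
    show "x \<otimes>\<^bsub>seqring R J\<^esub> y \<otimes>\<^bsub>seqring R J\<^esub> z = x \<otimes>\<^bsub>seqring R J\<^esub> (y \<otimes>\<^bsub>seqring R J\<^esub> z)"
      unfolding seq_mult conv_fps by (simp add: fps_nth_inverse mult.assoc)
  next
    fix x y
    show "x \<otimes>\<^bsub>seqring R J\<^esub> y = y \<otimes>\<^bsub>seqring R J\<^esub> x"
      unfolding seq_mult conv_fps by (simp add: mult.commute)
  next
    fix x :: "nat \<Rightarrow> 'a"
    have "(\<Sum>i\<le>k. (if i = 0 then 1 else 0) * x (k - i)) = x k" for k
    proof -
      have "(\<Sum>i\<le>k. (if i = 0 then 1 else 0) * x (k - i)) = (\<Sum>i\<le>k. (if i = 0 then x (k - i) else 0))"
        by (rule sum.cong) auto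
      also have "\<dots> = x k" by (simp add: sum.delta)
      finally show ?thesis .
    qed
    then show "\<one>\<^bsub>seqring R J\<^esub> \<otimes>\<^bsub>seqring R J\<^esub> x = x"
      unfolding seq_mult seq_one by auto
  next
    fix x y assume "x \<in> carrier (seqring R J)" "y \<in> carrier (seqring R J)"
    then show "x \<otimes>\<^bsub>seqring R J\<^esub> y \<in> carrier (seqring R J)" by (rule seq_mult_closed[OF fil])
  next
    show "\<one>\<^bsub>seqring R J\<^esub> \<in> carrier (seqring R J)" unfolding seq_one by (rule seq_one_closed[OF fil])
  qed
next
  fix x y z
  show "(x \<oplus>\<^bsub>seqring R J\<^esub> y) \<otimes>\<^bsub>seqring R J\<^esub> z = x \<otimes>\<^bsub>seqring R J\<^esub> z \<oplus>\<^bsub>seqring R J\<^esub> y \<otimes>\<^bsub>seqring R J\<^esub> z"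
    unfolding seq_mult seq_add by (simp add: distrib_right sum.distrib)
qed



declare ipow.simps(2)[simp del]

lemma seq_minus:
  assumes fil: "fil R J" and f: "f \<in> carrier (seqring R J)"
  shows "\<ominus>\<^bsub>seqring R J\<^esub> f = (\<lambda>k. - f k)"
proof -
  interpret cring "seqring R J" by (rule seq_cring[OF fil])
  show ?thesis
    by (rule minus_equality) (auto simp: seq_add seq_zero f seq_neg_closed[OF fil f])
qed

lemma seq_ideal:
  assumes fil: "fil R J"
    and Q1: "\<And>k. Q k \<subseteq> ipow R J k" and Q2: "\<And>k. 0 \<in> Q k"
    and Q3: "\<And>k x y. x \<in> Q k \<Longrightarrow> y \<in> Q k \<Longrightarrow> x + y \<in> Q k"
    and Q4: "\<And>k x. x \<in> Q k \<Longrightarrow> - x \<in> Q k"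
    and Q5: "\<And>i j x y. x \<in> Q i \<Longrightarrow> y \<in> ipow R J j \<Longrightarrow> x * y \<in> Q (i + j)"
  shows "ideal {f \<in> carrier (seqring R J). \<forall>k. f k \<in> Q k} (seqring R J)"
proof -
  interpret cring "seqring R J" by (rule seq_cring[OF fil])
  let ?H = "{f \<in> carrier (seqring R J). \<forall>k. f k \<in> Q k}"
  have Hmult: "x \<otimes>\<^bsub>seqring R J\<^esub> a \<in> ?H \<and> a \<otimes>\<^bsub>seqring R J\<^esub> x \<in> ?H"
    if a: "a \<in> ?H" and x: "x \<in> carrier (seqring R J)" for a x
  proof
    have ac: "a \<in> carrier (seqring R J)" using a by blast
    have "(\<Sum>i\<le>k. x i * a (k - i)) \<in> Q k" for k
    proof (rule addclosed_sum[OF Q2 Q3])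
      fix i assume "i \<in> {..k}"
      then have "k - i + i = k" by simp
      moreover have "a (k - i) * x i \<in> Q (k - i + i)" using Q5 a x unfolding seq_carrier by blast
      ultimately show "x i * a (k - i) \<in> Q k" by (simp add: mult.commute)
    qed
    then show "x \<otimes>\<^bsub>seqring R J\<^esub> a \<in> ?H" using m_closed[OF x ac] unfolding seq_mult by simp
    have "(\<Sum>i\<le>k. a i * x (k - i)) \<in> Q k" for k
    proof (rule addclosed_sum[OF Q2 Q3])
      fix i assume "i \<in> {..k}"
      then have "i + (k - i) = k" by simp
      moreover have "a i * x (k - i) \<in> Q (i + (k - i))" using Q5 a x unfolding seq_carrier by blast
      ultimately show "a i * x (k - i) \<in> Q k" by simp
    qed
    then show "a \<otimes>\<^bsub>seqring R J\<^esub> x \<in> ?H" using m_closed[OF ac x] unfolding seq_mult by simp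
  qed
  show ?thesis
  proof (rule idealI)
    show "ring (seqring R J)" by (rule ring_axioms)
    show "subgroup ?H (add_monoid (seqring R J))"
    proof (rule add.subgroupI, goal_cases)
      case 1 show ?case by auto
    next
      case 2
      have "(\<lambda>k. 0) \<in> ?H" using seq_zero_closed[OF fil] Q2 by simp
      then show ?case by blast
    next
      case (3 a)
      then have "(\<lambda>k. - a k) \<in> ?H" using seq_neg_closed[OF fil] Q4 by simp
      then show ?case
        using seq_minus[OF fil, of a] 3 unfolding a_inv_def by simp
    next
      case (4 a b)
      then show ?case
        using seq_add_closed[OF fil, of a b] Q3 by (simp add: seq_add)
    qed
  next
    fix a x assume "a \<in> ?H" "x \<in> carrier (seqring R J)"
    then show "x \<otimes>\<^bsub>seqring R J\<^esub> a \<in> ?H" using Hmult by blast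
  next
    fix a x assume "a \<in> ?H" "x \<in> carrier (seqring R J)"
    then show "a \<otimes>\<^bsub>seqring R J\<^esub> x \<in> ?H" using Hmult by blast
  qed
qed

lemma grN_ideal: assumes fil: "fil R J" shows "ideal (grN R J) (seqring R J)"
proof -
  have "ideal {f \<in> carrier (seqring R J). \<forall>k. f k \<in> ipow R J (Suc k)} (seqring R J)"
  proof (rule seq_ideal[OF fil])
    show "ipow R J (Suc k) \<subseteq> ipow R J k" for k using fil unfolding fil_def by blast
    show "0 \<in> ipow R J (Suc k)" for k using fil unfolding fil_def by blast
    show "x + y \<in> ipow R J (Suc k)" if "x \<in> ipow R J (Suc k)" "y \<in> ipow R J (Suc k)" for k x y
      using fil that unfolding fil_def by blast
    show "- x \<in> ipow R J (Suc k)" if "x \<in> ipow R J (Suc k)" for k x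
      using fil that unfolding fil_def by blast
    show "x * y \<in> ipow R J (Suc (i + j))" if "x \<in> ipow R J (Suc i)" "y \<in> ipow R J j" for i j x y
      using fil that unfolding fil_def by (metis add_Suc)
  qed
  then show ?thesis unfolding grN_def by simp
qed

lemma socv_ideal:
  assumes fil: "fil R J" and Vs: "Vs \<subseteq> ipow R J 0"
  shows "ideal {f \<in> carrier (seqring R J). \<forall>k. f k \<in> {u \<in> ipow R J k. \<forall>v\<in>Vs. u * v \<in> ipow R J (Suc k)}} (seqring R J)"
proof (rule seq_ideal[OF fil])
  show "{u \<in> ipow R J k. \<forall>v\<in>Vs. u * v \<in> ipow R J (Suc k)} \<subseteq> ipow R J k" for k by blast
  show "0 \<in> {u \<in> ipow R J k. \<forall>v\<in>Vs. u * v \<in> ipow R J (Suc k)}" for k using fil unfolding fil_def by simp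
  show "x + y \<in> {u \<in> ipow R J k. \<forall>v\<in>Vs. u * v \<in> ipow R J (Suc k)}"
    if "x \<in> {u \<in> ipow R J k. \<forall>v\<in>Vs. u * v \<in> ipow R J (Suc k)}" "y \<in> {u \<in> ipow R J k. \<forall>v\<in>Vs. u * v \<in> ipow R J (Suc k)}" for k x y
    using fil that unfolding fil_def by (simp add: distrib_right)
  show "- x \<in> {u \<in> ipow R J k. \<forall>v\<in>Vs. u * v \<in> ipow R J (Suc k)}"
    if "x \<in> {u \<in> ipow R J k. \<forall>v\<in>Vs. u * v \<in> ipow R J (Suc k)}" for k x
    using fil that unfolding fil_def by simp
  show "x * y \<in> {u \<in> ipow R J (i + j). \<forall>v\<in>Vs. u * v \<in> ipow R J (Suc (i + j))}"
    if x: "x \<in> {u \<in> ipow R J i. \<forall>v\<in>Vs. u * v \<in> ipow R J (Suc i)}" and y: "y \<in> ipow R J j" for i j x y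
  proof -
    have m: "\<forall>i j. \<forall>x\<in>ipow R J i. \<forall>y\<in>ipow R J j. x*y \<in> ipow R J (i+j)" using fil unfolding fil_def by blast
    have "x * y \<in> ipow R J (i + j)" using m x y by blast
    moreover have "x * y * v \<in> ipow R J (Suc (i + j))" if "v \<in> Vs" for v
    proof -
      have "x * v \<in> ipow R J (Suc i)" using x that by blast
      then have "x * v * y \<in> ipow R J (Suc i + j)" using m y by blast
      then show ?thesis by (simp add: ac_simps)
    qed
    ultimately show ?thesis by blast
  qed
qed

lemma coset_seq: "H +>\<^bsub>seqring R J\<^esub> f = {(\<lambda>k. h k + f k) | h. h \<in> H}"
  unfolding a_r_coset_def' seq_add by blast

lemma gr_ring: "fil R J \<Longrightarrow> ring (gr R J)"
  unfolding gr_def by (rule ideal.quotient_is_ring[OF grN_ideal])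

lemma gr_carrier: "fil R J \<Longrightarrow> carrier (gr R J) = (\<lambda>f. grN R J +>\<^bsub>seqring R J\<^esub> f) ` carrier (seqring R J)"
  unfolding gr_def FactRing_def A_RCOSETS_def' by auto

lemma gr_mult:
  assumes "fil R J" "f \<in> carrier (seqring R J)" "g \<in> carrier (seqring R J)"
  shows "(grN R J +>\<^bsub>seqring R J\<^esub> f) \<otimes>\<^bsub>gr R J\<^esub> (grN R J +>\<^bsub>seqring R J\<^esub> g)
         = grN R J +>\<^bsub>seqring R J\<^esub> (f \<otimes>\<^bsub>seqring R J\<^esub> g)"
  unfolding gr_def FactRing_def using ideal.rcoset_mult_add[OF grN_ideal[OF assms(1)] assms(2,3)] by simp

lemma gr_add:
  assumes "fil R J" "f \<in> carrier (seqring R J)" "g \<in> carrier (seqring R J)"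
  shows "(grN R J +>\<^bsub>seqring R J\<^esub> f) \<oplus>\<^bsub>gr R J\<^esub> (grN R J +>\<^bsub>seqring R J\<^esub> g)
         = grN R J +>\<^bsub>seqring R J\<^esub> (f \<oplus>\<^bsub>seqring R J\<^esub> g)"
  unfolding gr_def FactRing_def using ideal.a_rcos_sum[OF grN_ideal[OF assms(1)] assms(2,3)] by simp

lemma gr_zero: "\<zero>\<^bsub>gr R J\<^esub> = grN R J"
  unfolding gr_def FactRing_def by simp

lemma gr_const: "fil R J \<Longrightarrow> f \<in> grN R J \<Longrightarrow> grN R J +>\<^bsub>seqring R J\<^esub> f = grN R J"
proof -
  assume "fil R J" "f \<in> grN R J"
  interpret ideal "grN R J" "seqring R J" by (rule grN_ideal[OF \<open>fil R J\<close>])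
  show ?thesis by (rule a_rcos_const[OF \<open>f \<in> grN R J\<close>])
qed

lemma quot_ideal:
  assumes "fil R J" "ideal A (seqring R J)"
  shows "ideal ((\<lambda>f. grN R J +>\<^bsub>seqring R J\<^esub> f) ` A) (gr R J)"
  unfolding gr_def
  using ring.ring_ideal_imp_quot_ideal[OF cring.axioms(1)[OF seq_cring[OF assms(1)]] grN_ideal[OF assms(1)] assms(2)]
  by simp



lemma one_ME: "(1 :: 'k::field mpol) \<in> ME V {0}"
proof -
  have "Poly_Mapping.single 0 (1::'k) \<in> ME V {0}" by (rule single1_in_ME) (auto intro: lem_refl)
  then show ?thesis by simp
qed

lemma fil_ME: "fil (polyring V) (ME V E :: 'k::field mpol set)"
  unfolding fil_def ipow_ME
proof (intro conjI allI ballI)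
  fix k
  have I: "isid (polyring V) (ME V (pw E k) :: 'k mpol set)" by (rule isid_ME)
  show "0 \<in> (ME V (pw E k) :: 'k mpol set)" using I unfolding isid_def by blast
  show "x + y \<in> ME V (pw E k)" if "x \<in> ME V (pw E k)" "y \<in> ME V (pw E k)" for x y :: "'k mpol"
    using I that unfolding isid_def by blast
  show "- x \<in> ME V (pw E k)" if "x \<in> ME V (pw E k)" for x :: "'k mpol"
  proof -
    have "(-1 :: 'k mpol) \<in> polyring V" unfolding polyring_def by simp
    then have "(-1) * x \<in> ME V (pw E k)" using I that unfolding isid_def by blast
    then show ?thesis by simp
  qed
  show "(ME V (pw E (Suc k)) :: 'k mpol set) \<subseteq> ME V (pw E k)"
  proof (rule ME_mono)
    fix e assume "e \<in> pw E (Suc k)"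
    then obtain ea f where "e = ea + f" "ea \<in> pw E k" by auto
    then show "\<exists>e'\<in>pw E k. lem e' e" using lem_add_right by blast
  qed simp
next
  show "(1 :: 'k mpol) \<in> ME V (pw E 0)" using one_ME by simp
next
  fix i j and x y :: "'k mpol" assume "x \<in> ME V (pw E i)" "y \<in> ME V (pw E j)"
  then have "x * y \<in> ME V {a + b |a b. a \<in> pw E i \<and> b \<in> pw E j}" by (rule ME_mult)
  moreover have "ME V {a + b |a b. a \<in> pw E i \<and> b \<in> pw E j} \<subseteq> (ME V (pw E (i + j)) :: 'k mpol set)"
    by (rule ME_mono) (auto intro: pw_add lem_refl)
  ultimately show "x * y \<in> ME V (pw E (i + j))" by blast
qed

lemma mg_colon:
  assumes J: "isid (polyring V) J" and u: "u \<in> polyring V"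
  shows "(\<forall>v\<in>max_graded V. u * v \<in> J) \<longleftrightarrow> (\<forall>i\<in>V. u * Var i \<in> (J :: 'k::field mpol set))"
proof
  assume "\<forall>v\<in>max_graded V. u * v \<in> J"
  moreover have "Var i \<in> max_graded V" if "i \<in> V" for i
    unfolding max_graded_def using that by (intro ideal_in_gen1[OF subr_polyring]) blast
  ultimately show "\<forall>i\<in>V. u * Var i \<in> J" by blast
next
  assume A: "\<forall>i\<in>V. u * Var i \<in> J"
  have I: "isid (polyring V) {v \<in> polyring V. u * v \<in> J}"
    unfolding isid_def
  proof (intro conjI ballI subsetI)
    show "x \<in> polyring V" if "x \<in> {v \<in> polyring V. u * v \<in> J}" for x using that by blast
    have "(0::'k mpol) \<in> polyring V" unfolding polyring_def by simp
    then show "0 \<in> {v \<in> polyring V. u * v \<in> J}" using J unfolding isid_def by simp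
    show "x + y \<in> {v \<in> polyring V. u * v \<in> J}" if "x \<in> {v \<in> polyring V. u * v \<in> J}" "y \<in> {v \<in> polyring V. u * v \<in> J}" for x y
      using that J polyring_add[of x V y] unfolding isid_def by (simp add: distrib_left)
    show "r * x \<in> {v \<in> polyring V. u * v \<in> J}" if "r \<in> polyring V" "x \<in> {v \<in> polyring V. u * v \<in> J}" for r x
    proof -
      have "r * (u * x) \<in> J" using that J unfolding isid_def by blast
      then show ?thesis using that polyring_mult[of r V x] by (simp add: ac_simps)
    qed
  qed
  have "Var ` V \<subseteq> {v \<in> polyring V. u * v \<in> J}" using A Var_in_polyring by blast
  then have "ideal_in (polyring V) (Var ` V) \<subseteq> {v \<in> polyring V. u * v \<in> J}" by (rule ideal_in_min[OF I])
  then show "\<forall>v\<in>max_graded V. u * v \<in> J" unfolding max_graded_def by blast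
qed

lemma colon_mg:
  "isid (polyring V) J \<Longrightarrow> colon (polyring V) J (max_graded V) = {u \<in> polyring V. \<forall>i\<in>V. u * Var i \<in> (J :: 'k::field mpol set)}"
  unfolding colon_def using mg_colon by blast

lemma add_cancel_pm: "(x::nat \<Rightarrow>\<^sub>0 nat) + e = w + e \<Longrightarrow> x = w"
proof (intro poly_mapping_eqI)
  fix i assume "x + e = w + e"
  then have "Poly_Mapping.lookup (x + e) i = Poly_Mapping.lookup (w + e) i" by simp
  then show "Poly_Mapping.lookup x i = Poly_Mapping.lookup w i" by (simp add: lookup_add)
qed

lemma lookup_mult_single1:
  "Poly_Mapping.lookup (p * Poly_Mapping.single e (1::'a::comm_ring_1)) (w + e) = Poly_Mapping.lookup p (w::nat \<Rightarrow>\<^sub>0 nat)"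
proof -
  have "p * Poly_Mapping.single e 1 = (\<Sum>a\<in>Poly_Mapping.keys p. Poly_Mapping.single (a + e) (Poly_Mapping.lookup p a))"
    by (subst poly_decomp[of p]) (simp add: sum_distrib_right mult_single)
  then have "Poly_Mapping.lookup (p * Poly_Mapping.single e 1) (w + e)
      = (\<Sum>a\<in>Poly_Mapping.keys p. (Poly_Mapping.lookup p a when a + e = w + e))"
    by (simp add: lookup_sum lookup_single)
  also have "\<dots> = (\<Sum>a\<in>Poly_Mapping.keys p. (if a = w then Poly_Mapping.lookup p a else 0))"
    by (rule sum.cong) (auto simp: when_def dest: add_cancel_pm)
  also have "\<dots> = Poly_Mapping.lookup p w" by (simp add: sum.delta' in_keys_iff)
  finally show ?thesis .
qed

lemma Var_mult_single: "Poly_Mapping.single w c * Var i = Poly_Mapping.single (w + Poly_Mapping.single i 1) (c :: 'k::field)"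
  unfolding Var_def by (simp add: mult_single)

lemma term_colon:
  assumes p: "p * Var i \<in> ME V E" and w: "w \<in> Poly_Mapping.keys p"
  shows "\<exists>e\<in>E. lem e (w + Poly_Mapping.single i 1)"
proof -
  have "Poly_Mapping.lookup (p * Var i) (w + Poly_Mapping.single i 1) = Poly_Mapping.lookup p w"
    unfolding Var_def by (rule lookup_mult_single1)
  then have "w + Poly_Mapping.single i 1 \<in> Poly_Mapping.keys (p * Var i)" using w by (simp add: in_keys_iff)
  then show ?thesis using p unfolding ME_def by blast
qed

definition rX :: "nat set \<Rightarrow> (nat \<Rightarrow>\<^sub>0 nat) \<Rightarrow> (nat \<Rightarrow>\<^sub>0 nat)" where
  "rX V w = Abs_poly_mapping (\<lambda>i. if i \<in> V then Poly_Mapping.lookup w i else 0)"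

lemma lookup_rX: "Poly_Mapping.lookup (rX V w) = (\<lambda>i. if i \<in> V then Poly_Mapping.lookup w i else 0)"
proof -
  have "{i. (if i \<in> V then Poly_Mapping.lookup w i else 0) \<noteq> 0} \<subseteq> Poly_Mapping.keys w"
  proof
    fix i assume "i \<in> {i. (if i \<in> V then Poly_Mapping.lookup w i else 0) \<noteq> 0}"
    then have "Poly_Mapping.lookup w i \<noteq> 0" by (cases "i \<in> V") simp_all
    then show "i \<in> Poly_Mapping.keys w" by (simp add: in_keys_iff)
  qed
  then have "finite {i. (if i \<in> V then Poly_Mapping.lookup w i else 0) \<noteq> 0}" by (rule finite_subset) simp
  then show ?thesis unfolding rX_def by (rule lookup_Abs_poly_mapping)
qed

lemma keys_rX: "Poly_Mapping.keys (rX V w) \<subseteq> V"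
proof
  fix i assume "i \<in> Poly_Mapping.keys (rX V w)"
  then have "(if i \<in> V then Poly_Mapping.lookup w i else 0) \<noteq> 0" by (simp add: in_keys_iff lookup_rX)
  then show "i \<in> V" by (cases "i \<in> V") simp_all
qed

lemma rX_split: "Poly_Mapping.keys w \<subseteq> X \<union> Y \<Longrightarrow> X \<inter> Y = {} \<Longrightarrow> w = rX X w + rX Y w"
proof (intro poly_mapping_eqI)
  fix i assume "Poly_Mapping.keys w \<subseteq> X \<union> Y" "X \<inter> Y = {}"
  show "Poly_Mapping.lookup w i = Poly_Mapping.lookup (rX X w + rX Y w) i"
  proof (cases "i \<in> Poly_Mapping.keys w")
    case True
    then have "i \<in> X \<union> Y" using \<open>Poly_Mapping.keys w \<subseteq> X \<union> Y\<close> by blast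
    then show ?thesis using \<open>X \<inter> Y = {}\<close> by (auto simp: lookup_add lookup_rX)
  next
    case False
    then have "Poly_Mapping.lookup w i = 0" by (simp add: in_keys_iff)
    then show ?thesis by (simp add: lookup_add lookup_rX)
  qed
qed

lemma lem_split:
  assumes "Poly_Mapping.keys e1 \<subseteq> X" "Poly_Mapping.keys e2 \<subseteq> Y" "Poly_Mapping.keys a \<subseteq> X" "Poly_Mapping.keys b \<subseteq> Y"
    "X \<inter> Y = {}" "lem (e1 + e2) (a + b)"
  shows "lem e1 a \<and> lem e2 b"
  unfolding lem_def
proof (intro conjI allI)
  fix i
  have L: "Poly_Mapping.lookup e1 i + Poly_Mapping.lookup e2 i \<le> Poly_Mapping.lookup a i + Poly_Mapping.lookup b i"
    using assms(6) unfolding lem_def by (simp add: lookup_add)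
  show "Poly_Mapping.lookup e1 i \<le> Poly_Mapping.lookup a i"
  proof (cases "i \<in> X")
    case True
    then have "i \<notin> Y" using assms(5) by blast
    then have "Poly_Mapping.lookup b i = 0" using assms(4) by (auto simp: in_keys_iff)
    then show ?thesis using L by simp
  next
    case False
    then have "Poly_Mapping.lookup e1 i = 0" using assms(1) by (auto simp: in_keys_iff)
    then show ?thesis by simp
  qed
  show "Poly_Mapping.lookup e2 i \<le> Poly_Mapping.lookup b i"
  proof (cases "i \<in> Y")
    case True
    then have "i \<notin> X" using assms(5) by blast
    then have "Poly_Mapping.lookup a i = 0" using assms(3) by (auto simp: in_keys_iff)
    then show ?thesis using L by simp
  next
    case False
    then have "Poly_Mapping.lookup e2 i = 0" using assms(2) by (auto simp: in_keys_iff)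
    then show ?thesis by simp
  qed
qed



definition Aset :: "'a::comm_ring_1 set \<Rightarrow> 'a set \<Rightarrow> 'a set \<Rightarrow> (nat \<Rightarrow> 'a) set" where
  "Aset R J Vs = {f \<in> carrier (seqring R J). \<forall>k. f k \<in> {u \<in> ipow R J k. \<forall>v\<in>Vs. u * v \<in> ipow R J (Suc k)}}"

definition cls :: "'a::comm_ring_1 set \<Rightarrow> 'a set \<Rightarrow> (nat \<Rightarrow> 'a) \<Rightarrow> (nat \<Rightarrow> 'a) set" where
  "cls R J f = grN R J +>\<^bsub>seqring R J\<^esub> f"

lemma Aset_ideal: "fil R J \<Longrightarrow> Vs \<subseteq> ipow R J 0 \<Longrightarrow> ideal (cls R J ` Aset R J Vs) (gr R J)"
  unfolding Aset_def cls_def by (rule quot_ideal, assumption, rule socv_ideal)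

lemma fil_mult: "fil R J \<Longrightarrow> x \<in> ipow R J i \<Longrightarrow> y \<in> ipow R J j \<Longrightarrow> x * y \<in> ipow R J (i + j)"
  unfolding fil_def by blast

lemma Aset_prod:
  assumes fil: "fil R J" and f: "f \<in> Aset R J V1" and h: "h \<in> Aset R J V2"
  shows "f \<otimes>\<^bsub>seqring R J\<^esub> h \<in> Aset R J (V1 \<union> V2)"
proof -
  have fc: "f \<in> carrier (seqring R J)" and hc: "h \<in> carrier (seqring R J)" using f h unfolding Aset_def by blast+
  have fk: "f k \<in> ipow R J k" and hk: "h k \<in> ipow R J k" for k using fc hc unfolding seq_carrier by blast+
  have mc: "f \<otimes>\<^bsub>seqring R J\<^esub> h \<in> carrier (seqring R J)" by (rule seq_mult_closed[OF fil fc hc])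
  then have mk: "(\<Sum>i\<le>k. f i * h (k - i)) \<in> ipow R J k" for k unfolding seq_carrier seq_mult by blast
  have "(\<Sum>i\<le>k. f i * h (k - i)) * v \<in> ipow R J (Suc k)" if v: "v \<in> V1 \<union> V2" for k v
  proof -
    have "(\<Sum>i\<le>k. f i * h (k - i)) * v = (\<Sum>i\<le>k. f i * h (k - i) * v)" by (simp add: sum_distrib_right)
    moreover have "(\<Sum>i\<le>k. f i * h (k - i) * v) \<in> ipow R J (Suc k)"
    proof (rule fil_sum[OF fil])
      fix i assume "i \<in> {..k}"
      then have ik: "i \<le> k" by simp
      show "f i * h (k - i) * v \<in> ipow R J (Suc k)"
      proof (cases "v \<in> V1")
        case True
        then have "f i * v \<in> ipow R J (Suc i)" using f unfolding Aset_def by blast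
        then have "f i * v * h (k - i) \<in> ipow R J (Suc i + (k - i))" using fil_mult[OF fil _ hk] by blast
        moreover have "Suc i + (k - i) = Suc k" using ik by simp
        ultimately show ?thesis by (simp add: ac_simps)
      next
        case False
        then have "v \<in> V2" using v by blast
        then have "h (k - i) * v \<in> ipow R J (Suc (k - i))" using h unfolding Aset_def by blast
        then have "f i * (h (k - i) * v) \<in> ipow R J (i + Suc (k - i))" using fil_mult[OF fil fk] by blast
        moreover have "i + Suc (k - i) = Suc k" using ik by simp
        ultimately show ?thesis by (simp add: ac_simps)
      qed
    qed
    ultimately show ?thesis by simp
  qed
  then show ?thesis using mc mk unfolding Aset_def seq_mult by simp
qed

lemma cls_in_carrier: "fil R J \<Longrightarrow> f \<in> carrier (seqring R J) \<Longrightarrow> cls R J f \<in> carrier (gr R J)"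
  unfolding cls_def using gr_carrier by blast

lemma sup_dir:
  assumes fil: "fil R J" and V1: "V1 \<subseteq> ipow R J 0" and V2: "V2 \<subseteq> ipow R J 0"
    and G1: "G1 \<subseteq> cls R J ` Aset R J V1" and G2: "G2 \<subseteq> cls R J ` Aset R J V2"
  shows "ideal_prod (gr R J) (genideal (gr R J) G1) (genideal (gr R J) G2) \<subseteq> cls R J ` Aset R J (V1 \<union> V2)"
proof
  interpret ring "gr R J" by (rule gr_ring[OF fil])
  have V12: "V1 \<union> V2 \<subseteq> ipow R J 0" using V1 V2 by blast
  have I1: "genideal (gr R J) G1 \<subseteq> cls R J ` Aset R J V1" by (rule genideal_minimal[OF Aset_ideal[OF fil V1] G1])
  have I2: "genideal (gr R J) G2 \<subseteq> cls R J ` Aset R J V2" by (rule genideal_minimal[OF Aset_ideal[OF fil V2] G2])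
  interpret I12: ideal "cls R J ` Aset R J (V1 \<union> V2)" "gr R J" by (rule Aset_ideal[OF fil V12])
  fix x assume "x \<in> ideal_prod (gr R J) (genideal (gr R J) G1) (genideal (gr R J) G2)"
  then show "x \<in> cls R J ` Aset R J (V1 \<union> V2)"
  proof (induction rule: ideal_prod.induct)
    case (prod i j)
    then obtain f h where fh: "f \<in> Aset R J V1" "i = cls R J f" "h \<in> Aset R J V2" "j = cls R J h"
      using I1 I2 by blast
    have "f \<in> carrier (seqring R J)" "h \<in> carrier (seqring R J)" using fh unfolding Aset_def by blast+
    then have "i \<otimes>\<^bsub>gr R J\<^esub> j = cls R J (f \<otimes>\<^bsub>seqring R J\<^esub> h)"
      unfolding fh cls_def by (rule gr_mult[OF fil])
    moreover have "f \<otimes>\<^bsub>seqring R J\<^esub> h \<in> Aset R J (V1 \<union> V2)" by (rule Aset_prod[OF fil fh(1) fh(3)])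
    ultimately show ?case by blast
  next
    case (sum s1 s2)
    then show ?case using I12.a_closed by blast
  qed
qed



lemma Soc_image: "Soc R n J = cls R J ` {f. f \<in> carrier (seqring R J) \<and> (\<forall>k. f k \<in> colon R (ipow R J (Suc k)) n)}"
  unfolding Soc_def cls_def by blast

lemma Soc_eq: "Soc (polyring V) (max_graded V) (ME V E) =
   cls (polyring V) (ME V E) ` Aset (polyring V) (ME V E) (Var ` V :: 'k::field mpol set)"
proof -
  have "{f. f \<in> carrier (seqring (polyring V) (ME V E)) \<and>
        (\<forall>k. f k \<in> colon (polyring V) (ipow (polyring V) (ME V E) (Suc k)) (max_graded V))}
      = Aset (polyring V) (ME V E) (Var ` V :: 'k::field mpol set)"
  proof (rule equalityI; rule subsetI)
    fix f :: "nat \<Rightarrow> 'k mpol"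
    assume f: "f \<in> {f. f \<in> carrier (seqring (polyring V) (ME V E)) \<and>
        (\<forall>k. f k \<in> colon (polyring V) (ipow (polyring V) (ME V E) (Suc k)) (max_graded V))}"
    have "f k \<in> {u \<in> ipow (polyring V) (ME V E) k. \<forall>v\<in>Var ` V. u * v \<in> ipow (polyring V) (ME V E) (Suc k)}" for k
    proof -
      have "f k \<in> colon (polyring V) (ME V (pw E (Suc k))) (max_graded V)" using f unfolding ipow_ME by blast
      then have "\<forall>i\<in>V. f k * Var i \<in> ME V (pw E (Suc k))" unfolding colon_mg[OF isid_ME] by blast
      moreover have "f k \<in> ipow (polyring V) (ME V E) k" using f unfolding seq_carrier by blast
      ultimately show ?thesis unfolding ipow_ME by blast
    qed
    then show "f \<in> Aset (polyring V) (ME V E) (Var ` V)" using f unfolding Aset_def by blast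
  next
    fix f :: "nat \<Rightarrow> 'k mpol"
    assume f: "f \<in> Aset (polyring V) (ME V E) (Var ` V)"
    have "f k \<in> colon (polyring V) (ipow (polyring V) (ME V E) (Suc k)) (max_graded V)" for k
    proof -
      have "f k \<in> ME V (pw E k)" "\<forall>v\<in>Var ` V. f k * v \<in> ME V (pw E (Suc k))" using f unfolding Aset_def ipow_ME by blast+
      moreover have "ME V (pw E k) \<subseteq> (polyring V :: 'k mpol set)" unfolding ME_def by blast
      ultimately show ?thesis unfolding ipow_ME colon_mg[OF isid_ME] by blast
    qed
    then show "f \<in> {f. f \<in> carrier (seqring (polyring V) (ME V E)) \<and>
        (\<forall>k. f k \<in> colon (polyring V) (ipow (polyring V) (ME V E) (Suc k)) (max_graded V))}"
      using f unfolding Aset_def by blast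
  qed
  then show ?thesis unfolding Soc_image by simp
qed

lemma grN_add: "fil R J \<Longrightarrow> a \<in> grN R J \<Longrightarrow> b \<in> grN R J \<Longrightarrow> (\<lambda>k. a k + b k) \<in> grN R J"
  unfolding grN_def using seq_add_closed[of R J a b] unfolding seq_add fil_def by blast

lemma gr_map_coset:
  assumes fil: "fil R' J'" and N1: "N1 \<subseteq> grN R' J'" and z: "(\<lambda>k. 0) \<in> N1"
  shows "gr_map R' J' (N1 +>\<^bsub>seqring R J\<^esub> f) = grN R' J' +>\<^bsub>seqring R' J'\<^esub> f"
  unfolding gr_map_def coset_seq
proof (rule equalityI; rule subsetI)
  fix x assume "x \<in> (\<Union>g\<in>{\<lambda>k. h k + f k |h. h \<in> N1}. {\<lambda>k. h k + g k |h. h \<in> grN R' J'})"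
  then obtain h h' where hh: "h \<in> N1" "h' \<in> grN R' J'" "x = (\<lambda>k. h' k + (h k + f k))" by blast
  have "(\<lambda>k. h' k + h k) \<in> grN R' J'" using grN_add[OF fil hh(2)] N1 hh(1) by blast
  moreover have "x = (\<lambda>k. (h' k + h k) + f k)" using hh(3) by (simp add: add.assoc)
  ultimately show "x \<in> {\<lambda>k. h k + f k |h. h \<in> grN R' J'}"
    by (intro CollectI exI[of _ "\<lambda>k. h' k + h k"]) simp
next
  fix x assume "x \<in> {\<lambda>k. h k + f k |h. h \<in> grN R' J'}"
  then obtain h' where "h' \<in> grN R' J'" "x = (\<lambda>k. h' k + f k)" by blast
  moreover have "f \<in> {\<lambda>k. h k + f k |h. h \<in> N1}" using z by force
  ultimately show "x \<in> (\<Union>g\<in>{\<lambda>k. h k + f k |h. h \<in> N1}. {\<lambda>k. h k + g k |h. h \<in> grN R' J'})" by blast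
qed

lemma ME_pw_mono:
  "V \<subseteq> W \<Longrightarrow> E \<subseteq> E' \<Longrightarrow> (ME V (pw E k) :: 'k::field mpol set) \<subseteq> ME W (pw E' k)"
proof (rule ME_mono)
  fix e assume "V \<subseteq> W" "E \<subseteq> E'" "e \<in> pw E k"
  then have "e \<in> pw E' k" using pw_mono[of E E' k] by blast
  then show "\<exists>e'\<in>pw E' k. lem e' e" using lem_refl by blast
qed

lemma G_sub:
  assumes VW: "V \<subseteq> W" and EE: "E \<subseteq> E'"
  shows "gr_map (polyring W) (ME W E') ` Soc (polyring V) (max_graded V) (ME V E)
     \<subseteq> cls (polyring W) (ME W E') ` Aset (polyring W) (ME W E') (Var ` V :: 'k::field mpol set)"
proof
  fix D :: "(nat \<Rightarrow> 'k mpol) set" assume "D \<in> gr_map (polyring W) (ME W E') ` Soc (polyring V) (max_graded V) (ME V E)"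
  then obtain f :: "nat \<Rightarrow> 'k mpol" where f: "f \<in> Aset (polyring V) (ME V E) (Var ` V)"
    and D: "D = gr_map (polyring W) (ME W E') (cls (polyring V) (ME V E) f)"
    unfolding Soc_eq by blast
  have mono: "ipow (polyring V) (ME V E) k \<subseteq> ipow (polyring W) (ME W E') k" for k
    unfolding ipow_ME by (rule ME_pw_mono[OF VW EE])
  have carr: "g \<in> carrier (seqring (polyring W) (ME W E'))" if g: "g \<in> carrier (seqring (polyring V) (ME V E))" for g :: "nat \<Rightarrow> 'k mpol"
  proof -
    have "g k \<in> ipow (polyring W) (ME W E') k" for k
      using g mono[of k] unfolding seq_carrier by blast
    moreover have "finite {k. g k \<noteq> 0}" using g unfolding seq_carrier by blast
    ultimately show ?thesis unfolding seq_carrier by blast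
  qed
  have N1: "grN (polyring V) (ME V E) \<subseteq> grN (polyring W) (ME W E' :: 'k mpol set)"
  proof
    fix g :: "nat \<Rightarrow> 'k mpol" assume g: "g \<in> grN (polyring V) (ME V E)"
    have "g k \<in> ipow (polyring W) (ME W E') (Suc k)" for k
      using g mono[of "Suc k"] unfolding grN_def by blast
    moreover have "g \<in> carrier (seqring (polyring W) (ME W E'))" using g carr unfolding grN_def by blast
    ultimately show "g \<in> grN (polyring W) (ME W E')" unfolding grN_def by blast
  qed
  have "\<forall>k. (0::'k mpol) \<in> ipow (polyring V) (ME V E) (Suc k)" using fil_ME[of V E] unfolding fil_def by blast
  then have z: "(\<lambda>k. 0) \<in> grN (polyring V) (ME V E :: 'k mpol set)"
    unfolding grN_def using seq_zero_closed[OF fil_ME] by blast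
  have D2: "D = cls (polyring W) (ME W E') f"
    unfolding D cls_def by (rule gr_map_coset[OF fil_ME N1 z])
  have fc: "f \<in> carrier (seqring (polyring W) (ME W E'))" using f carr unfolding Aset_def by blast
  have "f k \<in> {u \<in> ipow (polyring W) (ME W E') k. \<forall>v\<in>Var ` V. u * v \<in> ipow (polyring W) (ME W E') (Suc k)}" for k
    using f mono[of k] mono[of "Suc k"] unfolding Aset_def by blast
  then have "f \<in> Aset (polyring W) (ME W E') (Var ` V)"
    using fc unfolding Aset_def by blast
  then show "D \<in> cls (polyring W) (ME W E') ` Aset (polyring W) (ME W E') (Var ` V)" using D2 by blast
qed



lemma side:
  assumes disj: "X \<inter> Y = {}" and E1k: "\<And>e. e \<in> E1 \<Longrightarrow> Poly_Mapping.keys e \<subseteq> X"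
    and E2k: "\<And>e. e \<in> E2 \<Longrightarrow> Poly_Mapping.keys e \<subseteq> Y"
    and a: "Poly_Mapping.keys a \<subseteq> X" and b: "Poly_Mapping.keys b \<subseteq> Y" and x: "x \<in> X"
    and D: "\<exists>e\<in>pw (E1 \<union> E2) (Suc (\<alpha> + \<beta>)). lem e ((a + Poly_Mapping.single x 1) + b)"
    and nB: "\<not> (\<exists>e'\<in>pw E2 (Suc \<beta>). lem e' b)"
  shows "\<exists>e''\<in>pw E1 (Suc \<alpha>). lem e'' (a + Poly_Mapping.single x 1)"
proof -
  obtain e where e: "e \<in> pw (E1 \<union> E2) (Suc (\<alpha> + \<beta>))" "lem e ((a + Poly_Mapping.single x 1) + b)" using D by blast
  then obtain c d e1 e2 where cd: "c + d = Suc (\<alpha> + \<beta>)" "e1 \<in> pw E1 c" "e2 \<in> pw E2 d" "e = e1 + e2"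
    using pw_union by blast
  have k1: "Poly_Mapping.keys e1 \<subseteq> X" by (rule pw_keys[OF E1k cd(2)])
  have k2: "Poly_Mapping.keys e2 \<subseteq> Y" by (rule pw_keys[OF E2k cd(3)])
  have ka: "Poly_Mapping.keys (a + Poly_Mapping.single x 1) \<subseteq> X"
    using keys_add[of a "Poly_Mapping.single x (1::nat)"] a x by auto
  have l: "lem e1 (a + Poly_Mapping.single x 1) \<and> lem e2 b"
    by (rule lem_split[OF k1 k2 ka b disj]) (use e cd in simp)
  have "d \<le> \<beta>"
  proof (rule ccontr)
    assume "\<not> d \<le> \<beta>"
    then have "Suc \<beta> \<le> d" by simp
    then obtain e'' where "e'' \<in> pw E2 (Suc \<beta>)" "lem e'' e2" using pw_down[OF cd(3)] by blast
    then show False using nB l lem_trans by blast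
  qed
  then have "Suc \<alpha> \<le> c" using cd(1) by simp
  then obtain e'' where "e'' \<in> pw E1 (Suc \<alpha>)" "lem e'' e1" using pw_down[OF cd(2)] by blast
  then show ?thesis using l lem_trans by blast
qed

lemma conv_delta:
  "(\<lambda>j. \<Sum>i\<le>j. (if i = \<alpha> then p else 0) * (if j - i = \<beta> then q else 0)) = (\<lambda>j. if j = (\<alpha>::nat) + \<beta> then p * (q::'a::comm_ring_1) else 0)"
proof
  fix j
  have "(\<Sum>i\<le>j. (if i = \<alpha> then p else 0) * (if j - i = \<beta> then q else 0))
      = (\<Sum>i\<le>j. (if i = \<alpha> then p * (if j - \<alpha> = \<beta> then q else 0) else 0))"
    by (rule sum.cong) auto
  also have "\<dots> = (if \<alpha> \<le> j then p * (if j - \<alpha> = \<beta> then q else 0) else 0)"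
    by (subst sum.delta) auto
  also have "\<dots> = (if j = \<alpha> + \<beta> then p * q else 0)" by auto
  finally show "(\<Sum>i\<le>j. (if i = \<alpha> then p else 0) * (if j - i = \<beta> then q else 0)) = (if j = \<alpha> + \<beta> then p * q else 0)" .
qed

lemma delta_carrier:
  assumes fil: "fil R J" and x: "x \<in> ipow R J k"
  shows "(\<lambda>j. if j = k then x else 0) \<in> carrier (seqring R J)"
proof -
  have "{j. (if j = k then x else 0) \<noteq> 0} \<subseteq> {k}" by auto
  then have "finite {j. (if j = k then x else 0) \<noteq> 0}" by (rule finite_subset) simp
  moreover have "(if j = k then x else 0) \<in> ipow R J j" for j using x fil unfolding fil_def by auto
  ultimately show ?thesis unfolding seq_carrier by simp
qed

lemma gr_map_cls:
  assumes VW: "V \<subseteq> W" and EE: "E \<subseteq> E'"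
  shows "gr_map (polyring W) (ME W E') (cls (polyring V) (ME V E) f) = cls (polyring W) (ME W E' :: 'k::field mpol set) f"
proof -
  have mono: "ipow (polyring V) (ME V E) k \<subseteq> ipow (polyring W) (ME W E' :: 'k mpol set) k" for k
    unfolding ipow_ME by (rule ME_pw_mono[OF VW EE])
  have carr: "g \<in> carrier (seqring (polyring W) (ME W E'))" if g: "g \<in> carrier (seqring (polyring V) (ME V E))" for g :: "nat \<Rightarrow> 'k mpol"
  proof -
    have "g k \<in> ipow (polyring W) (ME W E') k" for k
      using g mono[of k] unfolding seq_carrier by blast
    moreover have "finite {k. g k \<noteq> 0}" using g unfolding seq_carrier by blast
    ultimately show ?thesis unfolding seq_carrier by blast
  qed
  have N1: "grN (polyring V) (ME V E) \<subseteq> grN (polyring W) (ME W E' :: 'k mpol set)"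
  proof
    fix g :: "nat \<Rightarrow> 'k mpol" assume g: "g \<in> grN (polyring V) (ME V E)"
    have "g k \<in> ipow (polyring W) (ME W E') (Suc k)" for k
      using g mono[of "Suc k"] unfolding grN_def by blast
    moreover have "g \<in> carrier (seqring (polyring W) (ME W E'))" using g carr unfolding grN_def by blast
    ultimately show "g \<in> grN (polyring W) (ME W E')" unfolding grN_def by blast
  qed
  have "\<forall>k. (0::'k mpol) \<in> ipow (polyring V) (ME V E) (Suc k)" using fil_ME[of V E] unfolding fil_def by blast
  then have z: "(\<lambda>k. 0) \<in> grN (polyring V) (ME V E :: 'k mpol set)"
    unfolding grN_def using seq_zero_closed[OF fil_ME] by blast
  show ?thesis unfolding cls_def by (rule gr_map_coset[OF fil_ME N1 z])
qed



lemma ideal_sub_carrier: assumes "ideal I R" shows "I \<subseteq> carrier R"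
proof
  fix i assume "i \<in> I" then show "i \<in> carrier R" by (rule ideal.Icarr[OF assms])
qed

lemma atom:
  fixes p :: "'k::field mpol"
  assumes disj: "X \<inter> Y = {}" and E1k: "\<And>e. e \<in> E1 \<Longrightarrow> Poly_Mapping.keys e \<subseteq> X"
    and E2k: "\<And>e. e \<in> E2 \<Longrightarrow> Poly_Mapping.keys e \<subseteq> Y"
    and pk: "p \<in> ME (X \<union> Y) (pw (E1 \<union> E2) k)"
    and pc: "\<forall>i\<in>X \<union> Y. p * Var i \<in> ME (X \<union> Y) (pw (E1 \<union> E2) (Suc k))"
    and w: "w \<in> Poly_Mapping.keys p"
  shows "cls (polyring (X \<union> Y)) (ME (X \<union> Y) (E1 \<union> E2)) (\<lambda>j. if j = k then Poly_Mapping.single w (Poly_Mapping.lookup p w) else 0)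
     \<in> ideal_prod (gr (polyring (X \<union> Y)) (ME (X \<union> Y) (E1 \<union> E2)))
         (genideal (gr (polyring (X \<union> Y)) (ME (X \<union> Y) (E1 \<union> E2))) (gr_map (polyring (X \<union> Y)) (ME (X \<union> Y) (E1 \<union> E2)) ` Soc (polyring X) (max_graded X) (ME X E1)))
         (genideal (gr (polyring (X \<union> Y)) (ME (X \<union> Y) (E1 \<union> E2))) (gr_map (polyring (X \<union> Y)) (ME (X \<union> Y) (E1 \<union> E2)) ` Soc (polyring Y) (max_graded Y) (ME Y E2)))"
    (is "cls ?R ?J ?at \<in> ideal_prod ?G (genideal ?G ?G1) (genideal ?G ?G2)")
proof -
  define c where "c = Poly_Mapping.lookup p w"
  have c0: "c \<noteq> 0" using w unfolding c_def by (simp add: in_keys_iff)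
  have fil: "fil ?R ?J" by (rule fil_ME)
  interpret ring ?G by (rule gr_ring[OF fil])
  have G1s: "?G1 \<subseteq> cls ?R ?J ` Aset ?R ?J (Var ` X)" by (rule G_sub) auto
  have G2s: "?G2 \<subseteq> cls ?R ?J ` Aset ?R ?J (Var ` Y)" by (rule G_sub) auto
  have VX: "Var ` X \<subseteq> ipow ?R ?J 0" by (auto intro: Var_in_polyring)
  have VY: "Var ` Y \<subseteq> ipow ?R ?J 0" by (auto intro: Var_in_polyring)
  have G1c: "?G1 \<subseteq> carrier ?G" using G1s ideal_sub_carrier[OF Aset_ideal[OF fil VX]] by blast
  have G2c: "?G2 \<subseteq> carrier ?G" using G2s ideal_sub_carrier[OF Aset_ideal[OF fil VY]] by blast
  interpret T: ideal "ideal_prod ?G (genideal ?G ?G1) (genideal ?G ?G2)" ?G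
    by (rule ideal_prod_is_ideal[OF genideal_ideal[OF G1c] genideal_ideal[OF G2c]])
  have kw: "Poly_Mapping.keys w \<subseteq> X \<union> Y" using pk w unfolding ME_def polyring_def by blast
  obtain e where e: "e \<in> pw (E1 \<union> E2) k" "lem e w" using pk w unfolding ME_def by blast
  have atk: "Poly_Mapping.single w c \<in> ipow ?R ?J k"
    unfolding ipow_ME using single_in_ME[OF c0] kw e by blast
  have atc: "?at \<in> carrier (seqring ?R ?J)" unfolding c_def[symmetric] by (rule delta_carrier[OF fil atk])
  show ?thesis
  proof (cases "\<exists>e\<in>pw (E1 \<union> E2) (Suc k). lem e w")
    case True
    then have "Poly_Mapping.single w c \<in> ipow ?R ?J (Suc k)"
      unfolding ipow_ME using single_in_ME[OF c0] kw by blast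
    moreover have "(0::'k mpol) \<in> ipow ?R ?J (Suc j)" for j using fil unfolding fil_def by blast
    ultimately have "?at \<in> grN ?R ?J" using atc unfolding grN_def c_def by auto
    then have "cls ?R ?J ?at = \<zero>\<^bsub>?G\<^esub>" unfolding cls_def gr_zero by (rule gr_const[OF fil])
    then show ?thesis using T.zero_closed by simp
  next
    case False
    define a where "a = rX X w"
    define b where "b = rX Y w"
    have wab: "w = a + b" unfolding a_def b_def by (rule rX_split[OF kw disj])
    have ka: "Poly_Mapping.keys a \<subseteq> X" unfolding a_def by (rule keys_rX)
    have kb: "Poly_Mapping.keys b \<subseteq> Y" unfolding b_def by (rule keys_rX)
    obtain \<alpha> \<beta> e1 e2 where ab: "\<alpha> + \<beta> = k" "e1 \<in> pw E1 \<alpha>" "e2 \<in> pw E2 \<beta>" "e = e1 + e2"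
      using e(1) pw_union by blast
    have "lem (e1 + e2) (a + b)" using e(2) unfolding ab(4)[symmetric] wab[symmetric] .
    moreover have "Poly_Mapping.keys e1 \<subseteq> X" by (rule pw_keys[OF E1k ab(2)])
    moreover have "Poly_Mapping.keys e2 \<subseteq> Y" by (rule pw_keys[OF E2k ab(3)])
    ultimately have le12: "lem e1 a \<and> lem e2 b"
      using lem_split[of e1 X e2 Y a b] ka kb disj by blast
    have nA: "\<not> (\<exists>e'\<in>pw E1 (Suc \<alpha>). lem e' a)"
    proof
      assume "\<exists>e'\<in>pw E1 (Suc \<alpha>). lem e' a"
      then obtain e' where "e' \<in> pw E1 (Suc \<alpha>)" "lem e' a" by blast
      have "Suc \<alpha> + \<beta> = Suc k" using ab(1) by simp
      then have "e' + e2 \<in> pw (E1 \<union> E2) (Suc k)"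
        using pw_union[of "e' + e2" E1 E2 "Suc k"] \<open>e' \<in> pw E1 (Suc \<alpha>)\<close> ab(3) by blast
      moreover have "lem (e' + e2) w" unfolding wab using lem_add \<open>lem e' a\<close> le12 by blast
      ultimately show False using False by blast
    qed
    have nB: "\<not> (\<exists>e'\<in>pw E2 (Suc \<beta>). lem e' b)"
    proof
      assume "\<exists>e'\<in>pw E2 (Suc \<beta>). lem e' b"
      then obtain e' where "e' \<in> pw E2 (Suc \<beta>)" "lem e' b" by blast
      have "\<alpha> + Suc \<beta> = Suc k" using ab(1) by simp
      then have "e1 + e' \<in> pw (E1 \<union> E2) (Suc k)"
        using pw_union[of "e1 + e'" E1 E2 "Suc k"] \<open>e' \<in> pw E2 (Suc \<beta>)\<close> ab(2) by blast
      moreover have "lem (e1 + e') w" unfolding wab using lem_add \<open>lem e' b\<close> le12 by blast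
      ultimately show False using False by blast
    qed
    have SX: "Poly_Mapping.single a c * Var x \<in> ME X (pw E1 (Suc \<alpha>))" if x: "x \<in> X" for x
    proof -
      have "\<exists>e\<in>pw (E1 \<union> E2) (Suc k). lem e (w + Poly_Mapping.single x 1)"
        by (rule term_colon[OF _ w]) (use pc x in blast)
      then have D: "\<exists>e\<in>pw (E1 \<union> E2) (Suc (\<alpha> + \<beta>)). lem e ((a + Poly_Mapping.single x 1) + b)"
        using ab(1) wab by (simp add: ac_simps)
      have "\<exists>e''\<in>pw E1 (Suc \<alpha>). lem e'' (a + Poly_Mapping.single x 1)"
        by (rule side[OF disj E1k E2k ka kb x D nB])
      moreover have "Poly_Mapping.keys (a + Poly_Mapping.single x 1) \<subseteq> X"
        using keys_add[of a "Poly_Mapping.single x (1::nat)"] ka x by auto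
      ultimately show ?thesis unfolding Var_mult_single using single_in_ME[OF c0] by blast
    qed
    have SY: "Poly_Mapping.single b (1::'k) * Var y \<in> ME Y (pw E2 (Suc \<beta>))" if y: "y \<in> Y" for y
    proof -
      have "\<exists>e\<in>pw (E1 \<union> E2) (Suc k). lem e (w + Poly_Mapping.single y 1)"
        by (rule term_colon[OF _ w]) (use pc y in blast)
      then have D: "\<exists>e\<in>pw (E2 \<union> E1) (Suc (\<beta> + \<alpha>)). lem e ((b + Poly_Mapping.single y 1) + a)"
        using ab(1) wab by (simp add: ac_simps Un_commute)
      have "\<exists>e''\<in>pw E2 (Suc \<beta>). lem e'' (b + Poly_Mapping.single y 1)"
        by (rule side[OF _ E2k E1k kb ka y D nA]) (use disj in blast)
      moreover have "Poly_Mapping.keys (b + Poly_Mapping.single y 1) \<subseteq> Y"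
        using keys_add[of b "Poly_Mapping.single y (1::nat)"] kb y by auto
      ultimately show ?thesis unfolding Var_mult_single using single_in_ME[of "1::'k"] by simp
    qed
    define F where "F = (\<lambda>j. if j = \<alpha> then Poly_Mapping.single a c else (0::'k mpol))"
    define H where "H = (\<lambda>j. if j = \<beta> then Poly_Mapping.single b 1 else (0::'k mpol))"
    have aX: "Poly_Mapping.single a c \<in> ME X (pw E1 \<alpha>)" using single_in_ME[OF c0] ka le12 ab(2) by blast
    have bY: "Poly_Mapping.single b (1::'k) \<in> ME Y (pw E2 \<beta>)" using single_in_ME[of "1::'k"] kb le12 ab(3) by auto
    have filX: "fil (polyring X) (ME X E1 :: 'k mpol set)" by (rule fil_ME)
    have filY: "fil (polyring Y) (ME Y E2 :: 'k mpol set)" by (rule fil_ME)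
    have FA: "F \<in> Aset (polyring X) (ME X E1) (Var ` X)"
    proof -
      have "F \<in> carrier (seqring (polyring X) (ME X E1))"
        unfolding F_def by (rule delta_carrier[OF filX]) (simp add: ipow_ME aX)
      moreover have "F j \<in> {u \<in> ipow (polyring X) (ME X E1) j. \<forall>v\<in>Var ` X. u * v \<in> ipow (polyring X) (ME X E1) (Suc j)}" for j
      proof (cases "j = \<alpha>")
        case True
        have "\<forall>v\<in>Var ` X. Poly_Mapping.single a (c) * v \<in> ipow (polyring X) (ME X E1) (Suc j)"
        proof
          fix v :: "'k mpol" assume "v \<in> Var ` X"
          then obtain y where "y \<in> X" "v = Var y" by blast
          then show "Poly_Mapping.single a (c) * v \<in> ipow (polyring X) (ME X E1) (Suc j)"
            using SX[OF \<open>y \<in> X\<close>] True by (simp add: ipow_ME)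
        qed
        moreover have "Poly_Mapping.single a (c) \<in> ipow (polyring X) (ME X E1) j" using aX True by (simp add: ipow_ME)
        moreover have "F j = Poly_Mapping.single a (c)" using True unfolding F_def by simp
        ultimately show ?thesis by simp
      next
        case False
        have "(0::'k mpol) \<in> ipow (polyring X) (ME X E1) i" for i using filX unfolding fil_def by blast
        then show ?thesis unfolding F_def using False by simp
      qed
      ultimately show ?thesis unfolding Aset_def by blast
    qed
    have HA: "H \<in> Aset (polyring Y) (ME Y E2) (Var ` Y)"
    proof -
      have "H \<in> carrier (seqring (polyring Y) (ME Y E2))"
        unfolding H_def by (rule delta_carrier[OF filY]) (simp add: ipow_ME bY)
      moreover have "H j \<in> {u \<in> ipow (polyring Y) (ME Y E2) j. \<forall>v\<in>Var ` Y. u * v \<in> ipow (polyring Y) (ME Y E2) (Suc j)}" for j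
      proof (cases "j = \<beta>")
        case True
        have "\<forall>v\<in>Var ` Y. Poly_Mapping.single b (1::'k) * v \<in> ipow (polyring Y) (ME Y E2) (Suc j)"
        proof
          fix v :: "'k mpol" assume "v \<in> Var ` Y"
          then obtain y where "y \<in> Y" "v = Var y" by blast
          then show "Poly_Mapping.single b (1::'k) * v \<in> ipow (polyring Y) (ME Y E2) (Suc j)"
            using SY[OF \<open>y \<in> Y\<close>] True by (simp add: ipow_ME)
        qed
        moreover have "Poly_Mapping.single b (1::'k) \<in> ipow (polyring Y) (ME Y E2) j" using bY True by (simp add: ipow_ME)
        moreover have "H j = Poly_Mapping.single b (1::'k)" using True unfolding H_def by simp
        ultimately show ?thesis by simp
      next
        case False
        have "(0::'k mpol) \<in> ipow (polyring Y) (ME Y E2) i" for i using filY unfolding fil_def by blast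
        then show ?thesis unfolding H_def using False by simp
      qed
      ultimately show ?thesis unfolding Aset_def by blast
    qed
    have F1: "cls ?R ?J F \<in> genideal ?G ?G1"
    proof -
      have "cls (polyring X) (ME X E1) F \<in> Soc (polyring X) (max_graded X) (ME X E1)"
        unfolding Soc_eq using FA by blast
      moreover have "gr_map ?R ?J (cls (polyring X) (ME X E1) F) = cls ?R ?J F"
        by (rule gr_map_cls) auto
      ultimately have "cls ?R ?J F \<in> ?G1" by force
      then show ?thesis using genideal_self[OF G1c] by blast
    qed
    have H1: "cls ?R ?J H \<in> genideal ?G ?G2"
    proof -
      have "cls (polyring Y) (ME Y E2) H \<in> Soc (polyring Y) (max_graded Y) (ME Y E2)"
        unfolding Soc_eq using HA by blast
      moreover have "gr_map ?R ?J (cls (polyring Y) (ME Y E2) H) = cls ?R ?J H"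
        by (rule gr_map_cls) auto
      ultimately have "cls ?R ?J H \<in> ?G2" by force
      then show ?thesis using genideal_self[OF G2c] by blast
    qed
    have Fc: "F \<in> carrier (seqring ?R ?J)"
      unfolding F_def by (rule delta_carrier[OF fil]) (use aX ME_pw_mono[of X "X \<union> Y" E1 "E1 \<union> E2" \<alpha>] in \<open>auto simp: ipow_ME\<close>)
    have Hc: "H \<in> carrier (seqring ?R ?J)"
      unfolding H_def by (rule delta_carrier[OF fil]) (use bY ME_pw_mono[of Y "X \<union> Y" E2 "E1 \<union> E2" \<beta>] in \<open>auto simp: ipow_ME\<close>)
    have "F \<otimes>\<^bsub>seqring ?R ?J\<^esub> H = ?at"
    proof -
      have "F \<otimes>\<^bsub>seqring ?R ?J\<^esub> H = (\<lambda>j. if j = \<alpha> + \<beta> then Poly_Mapping.single a c * Poly_Mapping.single b 1 else 0)"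
        unfolding seq_mult F_def H_def by (rule conv_delta)
      also have "Poly_Mapping.single a c * Poly_Mapping.single b (1::'k) = Poly_Mapping.single w c"
        unfolding wab mult_single by simp
      also have "(\<lambda>j. if j = \<alpha> + \<beta> then Poly_Mapping.single w c else 0) = ?at"
        using ab(1) unfolding c_def by simp
      finally show ?thesis .
    qed
    then have eq: "cls ?R ?J F \<otimes>\<^bsub>?G\<^esub> cls ?R ?J H = cls ?R ?J ?at"
      unfolding cls_def using gr_mult[OF fil Fc Hc] by simp
    have mem: "cls ?R ?J F \<otimes>\<^bsub>?G\<^esub> cls ?R ?J H \<in> ideal_prod ?G (genideal ?G ?G1) (genideal ?G ?G2)"
      by (rule ideal_prod.prod[OF F1 H1])
    show ?thesis using mem unfolding eq .
  qed
qed



lemma term_ME: assumes "p \<in> ME V E" shows "Poly_Mapping.single w (Poly_Mapping.lookup p w) \<in> (ME V E :: 'k::field mpol set)"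
proof (cases "Poly_Mapping.lookup p w = 0")
  case True
  have "isid (polyring V) (ME V E :: 'k mpol set)" by (rule isid_ME)
  then show ?thesis using True unfolding isid_def by simp
next
  case False
  then have w: "w \<in> Poly_Mapping.keys p" by (simp add: in_keys_iff)
  then have "Poly_Mapping.keys w \<subseteq> V" "\<exists>e\<in>E. lem e w" using assms unfolding ME_def polyring_def by blast+
  then show ?thesis using single_in_ME[OF False] by blast
qed

lemma inf_dir:
  assumes disj: "X \<inter> Y = {}" and E1k: "\<And>e. e \<in> E1 \<Longrightarrow> Poly_Mapping.keys e \<subseteq> X"
    and E2k: "\<And>e. e \<in> E2 \<Longrightarrow> Poly_Mapping.keys e \<subseteq> Y"
  shows "cls (polyring (X \<union> Y)) (ME (X \<union> Y) (E1 \<union> E2)) ` Aset (polyring (X \<union> Y)) (ME (X \<union> Y) (E1 \<union> E2)) (Var ` (X \<union> Y))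
     \<subseteq> ideal_prod (gr (polyring (X \<union> Y)) (ME (X \<union> Y) (E1 \<union> E2 :: (nat \<Rightarrow>\<^sub>0 nat) set) :: 'k::field mpol set))
         (genideal (gr (polyring (X \<union> Y)) (ME (X \<union> Y) (E1 \<union> E2))) (gr_map (polyring (X \<union> Y)) (ME (X \<union> Y) (E1 \<union> E2)) ` Soc (polyring X) (max_graded X) (ME X E1)))
         (genideal (gr (polyring (X \<union> Y)) (ME (X \<union> Y) (E1 \<union> E2))) (gr_map (polyring (X \<union> Y)) (ME (X \<union> Y) (E1 \<union> E2)) ` Soc (polyring Y) (max_graded Y) (ME Y E2)))"
    (is "cls ?R ?J ` ?A \<subseteq> ideal_prod ?G (genideal ?G ?G1) (genideal ?G ?G2)")
proof
  have fil: "fil ?R ?J" by (rule fil_ME)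
  interpret ring ?G by (rule gr_ring[OF fil])
  have G1s: "?G1 \<subseteq> cls ?R ?J ` Aset ?R ?J (Var ` X)" by (rule G_sub) auto
  have G2s: "?G2 \<subseteq> cls ?R ?J ` Aset ?R ?J (Var ` Y)" by (rule G_sub) auto
  have VX: "Var ` X \<subseteq> ipow ?R ?J 0" by (auto intro: Var_in_polyring)
  have VY: "Var ` Y \<subseteq> ipow ?R ?J 0" by (auto intro: Var_in_polyring)
  have G1c: "?G1 \<subseteq> carrier ?G" using G1s ideal_sub_carrier[OF Aset_ideal[OF fil VX]] by blast
  have G2c: "?G2 \<subseteq> carrier ?G" using G2s ideal_sub_carrier[OF Aset_ideal[OF fil VY]] by blast
  interpret T: ideal "ideal_prod ?G (genideal ?G ?G1) (genideal ?G ?G2)" ?G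
    by (rule ideal_prod_is_ideal[OF genideal_ideal[OF G1c] genideal_ideal[OF G2c]])
  define Z where "Z = {g \<in> carrier (seqring ?R ?J). cls ?R ?J g \<in> ideal_prod ?G (genideal ?G ?G1) (genideal ?G ?G2)}"
  have Zadd: "(\<lambda>k. g1 k + g2 k) \<in> Z" if g1: "g1 \<in> Z" and g2: "g2 \<in> Z" for g1 g2
  proof -
    have c1: "g1 \<in> carrier (seqring ?R ?J)" and c2: "g2 \<in> carrier (seqring ?R ?J)" using g1 g2 unfolding Z_def by blast+
    have "cls ?R ?J g1 \<oplus>\<^bsub>?G\<^esub> cls ?R ?J g2 = cls ?R ?J (\<lambda>k. g1 k + g2 k)"
      unfolding cls_def using gr_add[OF fil c1 c2] unfolding seq_add .
    moreover have "cls ?R ?J g1 \<oplus>\<^bsub>?G\<^esub> cls ?R ?J g2 \<in> ideal_prod ?G (genideal ?G ?G1) (genideal ?G ?G2)"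
      using g1 g2 T.a_closed unfolding Z_def by blast
    moreover have "(\<lambda>k. g1 k + g2 k) \<in> carrier (seqring ?R ?J)" using seq_add_closed[OF fil c1 c2] unfolding seq_add .
    ultimately show ?thesis unfolding Z_def by simp
  qed
  have Z0: "(\<lambda>k. 0) \<in> Z"
  proof -
    have zc: "(\<lambda>k. 0) \<in> carrier (seqring ?R ?J)" by (rule seq_zero_closed[OF fil])
    have "\<forall>k. (0 :: 'k mpol) \<in> ipow ?R ?J (Suc k)" using fil unfolding fil_def by blast
    then have "(\<lambda>k. 0) \<in> grN ?R ?J" unfolding grN_def using zc by blast
    then have "cls ?R ?J (\<lambda>k. 0) = \<zero>\<^bsub>?G\<^esub>" unfolding cls_def gr_zero by (rule gr_const[OF fil])
    then show ?thesis unfolding Z_def using zc T.zero_closed by simp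
  qed
  fix x assume "x \<in> cls ?R ?J ` ?A"
  then obtain f where f: "f \<in> ?A" and x: "x = cls ?R ?J f" by blast
  have fk: "f k \<in> ME (X \<union> Y) (pw (E1 \<union> E2) k)" for k using f unfolding Aset_def ipow_ME by blast
  have fcol: "\<forall>i\<in>X \<union> Y. f k * Var i \<in> ME (X \<union> Y) (pw (E1 \<union> E2) (Suc k))" for k
    using f unfolding Aset_def ipow_ME by blast
  have delta: "(\<lambda>j. if j = k then f k else 0) \<in> Z" for k
  proof -
    have "finite W \<Longrightarrow> (\<lambda>j. if j = k then (\<Sum>w\<in>W. Poly_Mapping.single w (Poly_Mapping.lookup (f k) w)) else 0) \<in> Z" for W
    proof (induction W rule: finite_induct)
      case empty
      have "(\<lambda>j. if j = k then (\<Sum>w\<in>{}. Poly_Mapping.single w (Poly_Mapping.lookup (f k) w)) else (0::'k mpol)) = (\<lambda>j. 0)" by (rule ext) simp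
      then show ?case using Z0 by simp
    next
      case (insert w W)
      define atm where "atm = (\<lambda>j. if j = k then Poly_Mapping.single w (Poly_Mapping.lookup (f k) w) else (0::'k mpol))"
      have atZ: "atm \<in> Z"
      proof (cases "w \<in> Poly_Mapping.keys (f k)")
        case True
        have "atm \<in> carrier (seqring ?R ?J)" unfolding atm_def
          by (rule delta_carrier[OF fil]) (simp add: ipow_ME term_ME[OF fk])
        moreover have "cls ?R ?J atm \<in> ideal_prod ?G (genideal ?G ?G1) (genideal ?G ?G2)"
          unfolding atm_def by (rule atom[OF disj E1k E2k fk fcol True])
        ultimately show ?thesis unfolding Z_def by blast
      next
        case False
        then have "atm = (\<lambda>j. 0)" unfolding atm_def by (intro ext) (simp add: in_keys_iff)
        then show ?thesis using Z0 by simp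
      qed
      have "(\<lambda>j. if j = k then (\<Sum>w\<in>insert w W. Poly_Mapping.single w (Poly_Mapping.lookup (f k) w)) else 0)
          = (\<lambda>j. atm j + (if j = k then (\<Sum>w\<in>W. Poly_Mapping.single w (Poly_Mapping.lookup (f k) w)) else 0))"
        unfolding atm_def using insert(1,2) by auto
      then show ?case using Zadd[OF atZ insert(3)] by simp
    qed
    from this[of "Poly_Mapping.keys (f k)"] show ?thesis by (simp only: poly_decomp[of "f k", symmetric] finite_keys)
  qed
  have fK: "finite K \<Longrightarrow> (\<lambda>j. if j \<in> K then f j else 0) \<in> Z" for K
  proof (induction K rule: finite_induct)
    case empty then show ?case using Z0 by simp
  next
    case (insert k K)
    have "(\<lambda>j. if j \<in> insert k K then f j else 0) = (\<lambda>j. (if j = k then f k else 0) + (if j \<in> K then f j else 0))"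
      using insert(2) by auto
    then show ?case using Zadd[OF delta insert(3)] by simp
  qed
  have "finite {k. f k \<noteq> 0}" using f unfolding Aset_def seq_carrier by blast
  then have "(\<lambda>j. if j \<in> {k. f k \<noteq> 0} then f j else 0) \<in> Z" by (rule fK)
  moreover have "(\<lambda>j. if j \<in> {k. f k \<noteq> 0} then f j else 0) = f" by auto
  ultimately have "f \<in> Z" by simp
  then show "x \<in> ideal_prod ?G (genideal ?G ?G1) (genideal ?G ?G2)" unfolding x Z_def by blast
qed

lemma main_ME:
  assumes disj: "X \<inter> Y = {}" and E1k: "\<And>e. e \<in> E1 \<Longrightarrow> Poly_Mapping.keys e \<subseteq> X"
    and E2k: "\<And>e. e \<in> E2 \<Longrightarrow> Poly_Mapping.keys e \<subseteq> Y"
  shows "Soc (polyring (X \<union> Y)) (max_graded (X \<union> Y)) (ME (X \<union> Y) (E1 \<union> E2))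
     = ideal_prod (gr (polyring (X \<union> Y)) (ME (X \<union> Y) (E1 \<union> E2 :: (nat \<Rightarrow>\<^sub>0 nat) set) :: 'k::field mpol set))
         (genideal (gr (polyring (X \<union> Y)) (ME (X \<union> Y) (E1 \<union> E2))) (gr_map (polyring (X \<union> Y)) (ME (X \<union> Y) (E1 \<union> E2)) ` Soc (polyring X) (max_graded X) (ME X E1)))
         (genideal (gr (polyring (X \<union> Y)) (ME (X \<union> Y) (E1 \<union> E2))) (gr_map (polyring (X \<union> Y)) (ME (X \<union> Y) (E1 \<union> E2)) ` Soc (polyring Y) (max_graded Y) (ME Y E2)))"
    (is "?L = ideal_prod ?G (genideal ?G ?G1) (genideal ?G ?G2)")
proof
  have L: "?L = cls (polyring (X \<union> Y)) (ME (X \<union> Y) (E1 \<union> E2)) ` Aset (polyring (X \<union> Y)) (ME (X \<union> Y) (E1 \<union> E2)) (Var ` (X \<union> Y))"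
    by (rule Soc_eq)
  show "?L \<subseteq> ideal_prod ?G (genideal ?G ?G1) (genideal ?G ?G2)"
    unfolding L by (rule inf_dir[OF disj E1k E2k])
  have fil: "fil (polyring (X \<union> Y)) (ME (X \<union> Y) (E1 \<union> E2) :: 'k mpol set)" by (rule fil_ME)
  have VX: "Var ` X \<subseteq> ipow (polyring (X \<union> Y)) (ME (X \<union> Y) (E1 \<union> E2) :: 'k mpol set) 0" by (auto intro: Var_in_polyring)
  have VY: "Var ` Y \<subseteq> ipow (polyring (X \<union> Y)) (ME (X \<union> Y) (E1 \<union> E2) :: 'k mpol set) 0" by (auto intro: Var_in_polyring)
  have "ideal_prod ?G (genideal ?G ?G1) (genideal ?G ?G2)
     \<subseteq> cls (polyring (X \<union> Y)) (ME (X \<union> Y) (E1 \<union> E2)) ` Aset (polyring (X \<union> Y)) (ME (X \<union> Y) (E1 \<union> E2)) (Var ` X \<union> Var ` Y)"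
    by (rule sup_dir[OF fil VX VY]) (rule G_sub; auto)+
  then show "ideal_prod ?G (genideal ?G ?G1) (genideal ?G ?G2) \<subseteq> ?L" unfolding L image_Un .
qed



theorem theorem1p2:
  fixes m n :: nat and I1 I2 :: "'k::field mpol set"
  defines "X \<equiv> {..<m}" and "Y \<equiv> {m..<m+n}"
  defines "S1 \<equiv> polyring X" and "S2 \<equiv> polyring Y" and "S \<equiv> polyring (X \<union> Y)"
  defines "I \<equiv> ideal_in S (I1 \<union> I2)"
  assumes "m \<ge> 1" and "n \<ge> 1"
  assumes "monomial_ideal X I1" and "monomial_ideal Y I2"
  assumes "ratliff S1 I1" and "ratliff S2 I2" and "ratliff S I"
  shows "Soc S (max_graded (X \<union> Y)) I =
           ideal_prod (gr S I)
             (genideal (gr S I) (gr_map S I ` Soc S1 (max_graded X) I1))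
             (genideal (gr S I) (gr_map S I ` Soc S2 (max_graded Y) I2))"
proof -
  have disj: "X \<inter> Y = {}" unfolding \<open>X \<equiv> {..<m}\<close> \<open>Y \<equiv> {m..<m+n}\<close> by auto
  obtain E1 where E1k: "\<And>e. e \<in> E1 \<Longrightarrow> Poly_Mapping.keys e \<subseteq> X" and I1: "I1 = ME X E1"
    using monomial_ideal_ME[OF \<open>monomial_ideal X I1\<close>] by blast
  obtain E2 where E2k: "\<And>e. e \<in> E2 \<Longrightarrow> Poly_Mapping.keys e \<subseteq> Y" and I2: "I2 = ME Y E2"
    using monomial_ideal_ME[OF \<open>monomial_ideal Y I2\<close>] by blast
  have Ieq: "I = ME (X \<union> Y) (E1 \<union> E2)"
    unfolding \<open>I \<equiv> ideal_in S (I1 \<union> I2)\<close> \<open>S \<equiv> polyring (X \<union> Y)\<close> I1 I2 by (rule ideal_sum_ME[OF E1k E2k])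
  show ?thesis
    unfolding Ieq \<open>S \<equiv> polyring (X \<union> Y)\<close> \<open>S1 \<equiv> polyring X\<close> \<open>S2 \<equiv> polyring Y\<close> I1 I2
    by (rule main_ME[OF disj E1k E2k])
qed

end
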